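(* Consider the power network model described in the context (linearized power flows), and suppose that each $f_i$ is continuously differentiable and there exist constants $\mu>0$ and $L>0$ such that $-L\le \frac{1}{M_i}f_i'(w)\le-\mu$ for all $i\in\mathcal N$, $w\in\mathbb R$. Let $$K:=\frac{32\,N M_b\,(1+\frac{L}{\mu})^2}{(\min_{i}M_i)\,\mu^2},\qquad c:=\frac{\mu\lambda_2}{4(\lambda_2+4L^2)} .$$ Suppose the initial state $(\omega(0),\theta(0))$ satisfies the steady-state equations $$0=f_i(\omega_i(0))+\xi_i(0_-)-\sum_{j\in\mathcal N_i}B_{ij}(\theta_i(0)-\theta_j(0))\ \ \forall i\in\mathcal N,\qquad 0=\omega_i(0)-\omega_j(0)\ \ \forall\{i,j\}\in\mathcal E.$$ If $C:=\max_{i\in\mathcal N}\sup_{t>0}|\dot\xi_i(t)|/M_i$ is finite, then for all $t>0$, $$\max_{i\in\mathcal N}|\omega_i(t)-\omega_b(t)|^2\le \alpha^*|\Delta\xi|^2e^{-ct}+KC^2\frac{(\lambda_2+4L^2)^2}{\lambda_2^3},$$ where $\Delta\xi:=\xi(0_+)-\xi(0_-)\in\mathbb R^N$ and $$\alpha^*:=\frac{(\phi_1+\phi_2)\lambda_2+4\phi_2L^2}{\lambda_2^2},\qquad \phi_1:=\frac{1}{\min_iM_i^2},\qquad \phi_2:=\frac{16L^2}{3\mu^2M_b(\min_iM_i)} .$$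
   Context: Let $(\mathcal N,\mathcal E)$ be a connected undirected graph with node set $\mathcal N=\{1,\dots,N\}$; $\mathcal N_i$ denotes the set of neighbors of node $i$. Each node $i$ has $M_i>0$ and a function $f_i:\mathbb R\to\mathbb R$ with $f_i(0)=0$; each edge $\{i,j\}$ has a weight $B_{ij}=B_{ji}>0$. The disturbances $\xi_i(t)$ are continuously differentiable on $(0,\infty)$ and may jump at $t=0$: $\xi_i(0_-)$ is the value before time $0$ and $\xi_i(0_+)=\lim_{t\to0^+}\xi_i(t)$; $\xi=(\xi_1,\dots,\xi_N)^T$. The nodal dynamics are $$\dot\theta_i=\omega_i,\qquad M_i\dot\omega_i=f_i(\omega_i)+\xi_i(t)-\sum_{j\in\mathcal N_i}B_{ij}(\theta_i-\theta_j).$$ $M=\mathrm{diag}(M_i)$, $M_b=\frac1N\sum_iM_i$, $f_b(w)=\frac1N\sum_if_i(w)$, $\xi_b=\frac1N\sum_i\xi_i$. The blended dynamics is $M_b\dot\omega_b=f_b(\omega_b)+\xi_b(t)$ with $\omega_b(0)=\sum_iM_i\omega_i(0)/\sum_iM_i$. $L_B$ is the weighted graph Laplacian with off-diagonal entries $-B_{ij}$ and diagonal entries $\sum_{j\ne i}B_{ij}$; $\lambda_2$ is the second-smallest eigenvalue of $M^{-1}L_B$. $|\cdot|$ is the Euclidean norm. Statements "for $t>0$" start from $t=0_+$. *)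

theory Defs
  imports "HOL-Analysis.Analysis" "HOL-Library.Multiset"
begin

definition laplacian :: "('n::finite \<Rightarrow> 'n \<Rightarrow> bool) \<Rightarrow> ('n \<Rightarrow> 'n \<Rightarrow> real) \<Rightarrow> real^'n^'n" where
  "laplacian E B = (\<chi> i j. if i = j then (\<Sum>k\<in>{k. E i k}. B i k)
                             else if E i j then - B i j else 0)"

definition scaled_laplacian :: "('n::finite \<Rightarrow> real) \<Rightarrow> ('n \<Rightarrow> 'n \<Rightarrow> bool) \<Rightarrow> ('n \<Rightarrow> 'n \<Rightarrow> real) \<Rightarrow> real^'n^'n" where
  "scaled_laplacian M E B = (\<chi> i j. laplacian E B $ i $ j / M i)"

definition eigenvalues_mset :: "real^'n^'n \<Rightarrow> real multiset" where
  "eigenvalues_mset A = (THE S. \<forall>x. det (mat x - A) = (\<Prod>l\<in>#S. x - l))"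

text \<open>The k-th smallest eigenvalue (0-based index), counted with multiplicity.\<close>
definition kth_smallest_eigenvalue :: "real^'n^'n \<Rightarrow> nat \<Rightarrow> real" where
  "kth_smallest_eigenvalue A k = sorted_list_of_multiset (eigenvalues_mset A) ! k"

definition lambda2 :: "('n::finite \<Rightarrow> real) \<Rightarrow> ('n \<Rightarrow> 'n \<Rightarrow> bool) \<Rightarrow> ('n \<Rightarrow> 'n \<Rightarrow> real) \<Rightarrow> real" where
  "lambda2 M E B = kth_smallest_eigenvalue (scaled_laplacian M E B) 1"

end

theory Submission
  imports Defs
begin



lemma symm_dot:
  fixes S :: "real^'n^'n"
  assumes "transpose S = S"
  shows "x \<bullet> (S *v y) = (S *v x) \<bullet> y"
  by (metis assms dot_lmul_matrix vector_transpose_matrix)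

lemma quad_zero:
  fixes a b :: real
  assumes "\<And>t. b * t + a * t^2 \<le> 0"
  shows "b = 0"
proof (rule ccontr)
  assume b: "b \<noteq> 0"
  define c where "c = 2 * (\<bar>a\<bar> + 1)"
  have c: "c > 0" by (simp add: c_def add_pos_nonneg)
  define t where "t = b / c"
  have "b * t = b^2 / c" by (simp add: t_def power2_eq_square)
  moreover have "a * t^2 \<ge> - \<bar>a\<bar> * b^2 / c^2"
    by (simp add: t_def power_divide) (smt (verit) abs_ge_self abs_minus_cancel divide_minus_left mult_right_mono zero_le_power2 divide_right_mono zero_le_power2 minus_mult_left)
  moreover have "b^2 / c - \<bar>a\<bar> * b^2 / c^2 > 0"
  proof -
    have "b^2 / c - \<bar>a\<bar> * b^2 / c^2 = b^2 * (c - \<bar>a\<bar>) / c^2"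
      using c by (simp add: field_simps power2_eq_square)
    moreover have "c - \<bar>a\<bar> > 0" by (simp add: c_def)
    ultimately show ?thesis using b c by simp
  qed
  ultimately have "b * t + a * t^2 > 0" by linarith
  with assms[of t] show False by linarith
qed

lemma eig_step:
  fixes S :: "real^'n^'n"
  assumes symm: "transpose S = S"
    and U: "finite U" "card U < CARD('n)"
    and Ueig: "\<And>u. u \<in> U \<Longrightarrow> \<exists>d. S *v u = d *\<^sub>R u"
  obtains x where "norm x = 1" "\<forall>u\<in>U. x \<bullet> u = 0" "\<exists>d. S *v x = d *\<^sub>R x"
proof -
  define W where "W = {x::real^'n. \<forall>u\<in>U. x \<bullet> u = 0}"
  define K where "K = W \<inter> sphere 0 1"
  define f where "f = (\<lambda>x::real^'n. x \<bullet> (S *v x))"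
  have dimU: "dim U < DIM(real^'n)"
    using U dim_le_card'[OF U(1)] by simp
  then obtain x1 where x1: "x1 \<noteq> 0" "\<And>y. y \<in> span U \<Longrightarrow> orthogonal x1 y"
    using orthogonal_to_subspace_exists[OF dimU] by blast
  have "x1 /\<^sub>R norm x1 \<in> K"
    using x1 by (auto simp: K_def W_def orthogonal_def span_base)
  hence Kne: "K \<noteq> {}" by auto
  have clW: "closed W"
  proof -
    have "W = (\<Inter>u\<in>U. {x. x \<bullet> u = 0})" by (auto simp: W_def)
    moreover have "closed {x::real^'n. x \<bullet> u = 0}" for u
      using closed_hyperplane[of u 0] by (simp add: inner_commute)
    ultimately show ?thesis by auto
  qed
  have cK: "compact K" unfolding K_def
    using clW by (simp add: closed_Int_compact)
  have cf: "continuous_on K f" unfolding f_def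
    by (intro continuous_intros linear_continuous_on matrix_vector_mul_bounded_linear)
  obtain x0 where x0: "x0 \<in> K" "\<And>y. y \<in> K \<Longrightarrow> f y \<le> f x0"
    using compact_attains_sup[of "f ` K"] cK cf Kne
    by (metis compact_continuous_image empty_is_image imageE imageI)
  define lam where "lam = f x0"
  have x0x0: "x0 \<bullet> x0 = 1" using x0 by (simp add: K_def norm_eq_1)
  have x0W: "x0 \<in> W" and nx0: "norm x0 = 1" using x0 by (auto simp: K_def)
  have bound: "f v \<le> lam * (v \<bullet> v)" if "v \<in> W" for v
  proof (cases "v = 0")
    case True then show ?thesis by (simp add: f_def)
  next
    case False
    have "v /\<^sub>R norm v \<in> K" using that False by (auto simp: K_def W_def)
    hence "f (v /\<^sub>R norm v) \<le> lam" using x0 by (simp add: lam_def)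
    moreover have "f (v /\<^sub>R norm v) = f v / (norm v)^2"
      by (simp add: f_def matrix_vector_mult_scaleR power2_eq_square divide_inverse inverse_mult_distrib mult_ac)
    moreover have "v \<bullet> v = (norm v)^2" by (simp add: power2_norm_eq_inner)
    ultimately show ?thesis using False
      by (simp add: divide_le_eq mult.commute)
  qed
  have stat: "y \<bullet> (S *v x0) = lam * (y \<bullet> x0)" if y: "y \<in> W" for y
  proof -
    have "(2 * (y \<bullet> (S *v x0) - lam * (y \<bullet> x0))) * t + (f y - lam * (y \<bullet> y)) * t^2 \<le> 0" for t
    proof -
      have "x0 + t *\<^sub>R y \<in> W" using x0W y by (auto simp: W_def inner_add_left)
      hence "f (x0 + t *\<^sub>R y) \<le> lam * ((x0 + t *\<^sub>R y) \<bullet> (x0 + t *\<^sub>R y))" by (rule bound)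
      moreover have "f (x0 + t *\<^sub>R y) = f x0 + 2 * t * (y \<bullet> (S *v x0)) + t^2 * f y"
        using symm_dot[OF symm, of x0 y]
        by (simp add: f_def matrix_vector_right_distrib matrix_vector_mult_scaleR inner_add_left inner_add_right power2_eq_square inner_commute algebra_simps)
      moreover have "(x0 + t *\<^sub>R y) \<bullet> (x0 + t *\<^sub>R y) = 1 + 2 * t * (y \<bullet> x0) + t^2 * (y \<bullet> y)"
        using x0x0 by (simp add: inner_add_left inner_add_right power2_eq_square inner_commute algebra_simps)
      ultimately show ?thesis by (simp add: lam_def algebra_simps power2_eq_square x0x0 inner_commute)
    qed
    from quad_zero[OF this] show ?thesis by simp
  qed
  define r where "r = S *v x0 - lam *\<^sub>R x0"
  have "r \<in> W"
  proof -
    have "r \<bullet> u = 0" if u: "u \<in> U" for u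
    proof -
      obtain d where d: "S *v u = d *\<^sub>R u" using Ueig[OF u] by blast
      have "(S *v x0) \<bullet> u = x0 \<bullet> (S *v u)" using symm_dot[OF symm, of x0 u] by (simp add: inner_commute)
      also have "\<dots> = 0" using d x0W u by (simp add: W_def)
      finally show ?thesis using x0W u by (simp add: r_def W_def inner_diff_left)
    qed
    thus ?thesis by (simp add: W_def)
  qed
  from stat[OF this] have "r \<bullet> r = 0"
    by (simp add: r_def inner_diff_left inner_diff_right inner_commute right_diff_distrib)
  hence "r = 0" by simp
  hence "S *v x0 = lam *\<^sub>R x0" by (simp add: r_def)
  thus ?thesis using that nx0 x0W by (auto simp: W_def)
qed

lemma eig_set:
  fixes S :: "real^'n^'n"
  assumes symm: "transpose S = S" and k: "k \<le> CARD('n)"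
  shows "\<exists>U. finite U \<and> card U = k \<and> (\<forall>u\<in>U. norm u = 1 \<and> (\<exists>d. S *v u = d *\<^sub>R u))
           \<and> (\<forall>u\<in>U. \<forall>v\<in>U. u \<noteq> v \<longrightarrow> u \<bullet> v = 0)"
  using k
proof (induction k)
  case 0 show ?case by (intro exI[of _ "{}"]) auto
next
  case (Suc k)
  then obtain U where U: "finite U" "card U = k" "\<forall>u\<in>U. norm u = 1 \<and> (\<exists>d. S *v u = d *\<^sub>R u)"
      "\<forall>u\<in>U. \<forall>v\<in>U. u \<noteq> v \<longrightarrow> u \<bullet> v = 0" by auto
  obtain x where x: "norm x = 1" "\<forall>u\<in>U. x \<bullet> u = 0" "\<exists>d. S *v x = d *\<^sub>R x"
    using eig_step[OF symm U(1)] U Suc.prems by auto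
  have "x \<notin> U" using x by (metis inner_eq_zero_iff norm_zero zero_neq_one)
  show ?case
    apply (rule exI[of _ "insert x U"]) using U x \<open>x \<notin> U\<close> by (auto simp: inner_commute)
qed

lemma spectral:
  fixes S :: "real^'n^'n"
  assumes symm: "transpose S = S"
  obtains p :: "'n \<Rightarrow> real^'n" and d :: "'n \<Rightarrow> real"
  where "\<And>k l. p k \<bullet> p l = (if k = l then 1 else 0)" "\<And>k. S *v p k = d k *\<^sub>R p k"
proof -
  obtain U where U: "finite U" "card U = CARD('n)" "\<forall>u\<in>U. norm u = 1 \<and> (\<exists>d. S *v u = d *\<^sub>R u)"
      "\<forall>u\<in>U. \<forall>v\<in>U. u \<noteq> v \<longrightarrow> u \<bullet> v = 0"
    using eig_set[OF symm, of "CARD('n)"] by auto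
  obtain h where h: "bij_betw h (UNIV::'n set) U"
    using finite_same_card_bij[of "UNIV::'n set" U] U by auto
  define d where "d = (\<lambda>k. SOME d. S *v h k = d *\<^sub>R h k)"
  have hU: "h k \<in> U" for k using h by (auto simp: bij_betw_def)
  have 1: "h k \<bullet> h l = (if k = l then 1 else 0)" for k l
  proof (cases "k = l")
    case True then show ?thesis using U(3) hU[of k] by (simp add: norm_eq_1)
  next
    case False
    hence "h k \<noteq> h l" using h by (metis UNIV_I bij_betw_iff_bijections)
    then show ?thesis using U(4) hU False by auto
  qed
  have 2: "S *v h k = d k *\<^sub>R h k" for k
    unfolding d_def using U(3) hU[of k] by (metis (mono_tags) someI_ex)
  show ?thesis using that[OF 1 2] .
qed

lemma onb_expand:
  fixes p :: "'n \<Rightarrow> real^'n"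
  assumes on: "\<And>k l. p k \<bullet> p l = (if k = l then 1 else 0)"
  shows "x = (\<Sum>k\<in>UNIV. (x \<bullet> p k) *\<^sub>R p k)"
proof -
  have inj: "inj p"
  proof (rule injI)
    fix k l assume "p k = p l"
    hence "p k \<bullet> p l = 1" using on[of k k] by simp
    thus "k = l" using on[of k l] by (auto split: if_splits)
  qed
  define U where "U = range p"
  have cU: "card U = CARD('n)" using inj by (simp add: U_def card_image)
  have pw: "pairwise orthogonal U"
    using on by (auto simp: pairwise_def U_def orthogonal_def)
  have z: "0 \<notin> U" using on by (auto simp: U_def) (metis inner_zero_left zero_neq_one)
  have ind: "independent U" using pairwise_orthogonal_independent[OF pw z] .
  have "UNIV \<subseteq> span U"
    using card_eq_dim[of U UNIV] ind cU by (simp add: U_def)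
  define y where "y = x - (\<Sum>k\<in>UNIV. (x \<bullet> p k) *\<^sub>R p k)"
  have "y \<bullet> p l = 0" for l
  proof -
    have "(\<Sum>k\<in>UNIV. (x \<bullet> p k) *\<^sub>R p k) \<bullet> p l = (\<Sum>k\<in>UNIV. (x \<bullet> p k) * (p k \<bullet> p l))"
      by (simp add: inner_sum_left)
    also have "\<dots> = (\<Sum>k\<in>UNIV. if k = l then x \<bullet> p k else 0)"
      by (rule sum.cong) (auto simp: on)
    also have "\<dots> = x \<bullet> p l" by simp
    finally show ?thesis by (simp add: y_def inner_diff_left)
  qed
  hence "orthogonal y z" if "z \<in> U" for z using that by (auto simp: U_def orthogonal_def inner_commute)
  hence "orthogonal y y" using orthogonal_to_span \<open>UNIV \<subseteq> span U\<close> by blast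
  hence "y = 0" by (simp add: orthogonal_def)
  thus ?thesis by (simp add: y_def)
qed

lemma spectral_det:
  fixes S :: "real^'n^'n" and p :: "'n \<Rightarrow> real^'n"
  assumes on: "\<And>k l. p k \<bullet> p l = (if k = l then 1 else 0)"
    and eig: "\<And>k. S *v p k = d k *\<^sub>R p k"
  shows "det (mat x - S) = (\<Prod>k\<in>UNIV. x - d k)"
proof -
  define P :: "real^'n^'n" where "P = (\<chi> i k. p k $ i)"
  define D :: "real^'n^'n" where "D = (\<chi> i j. if i = j then x - d i else 0)"
  have "transpose P ** P = mat 1"
    using on by (simp add: vec_eq_iff P_def matrix_matrix_mult_def transpose_def mat_def inner_vec_def mult.commute)
  hence "det P * det P = 1" by (metis det_I det_mul det_transpose)
  hence dP: "det P \<noteq> 0" by auto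
  have eigc: "(\<Sum>j\<in>UNIV. S $ i $ j * p k $ j) = d k * p k $ i" for i k
    using eig[of k] by (simp add: vec_eq_iff matrix_vector_mult_def)
  have "((mat x - S) ** P) $ i $ k = (P ** D) $ i $ k" for i k
  proof -
    have "((mat x - S) ** P) $ i $ k = (\<Sum>j\<in>UNIV. (if i = j then x else 0) * p k $ j) - (\<Sum>j\<in>UNIV. S $ i $ j * p k $ j)"
      by (simp add: P_def matrix_matrix_mult_def mat_def left_diff_distrib sum_subtractf)
    also have "(\<Sum>j\<in>UNIV. (if i = j then x else 0) * p k $ j) = (\<Sum>j\<in>UNIV. if i = j then x * p k $ j else 0)"
      by (rule sum.cong) auto
    also have "\<dots> = x * p k $ i" by simp
    finally have A: "((mat x - S) ** P) $ i $ k = p k $ i * (x - d k)" using eigc[of i k] by (simp add: algebra_simps)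
    have "(P ** D) $ i $ k = (\<Sum>j\<in>UNIV. p j $ i * (if j = k then x - d j else 0))"
      by (simp add: P_def D_def matrix_matrix_mult_def)
    also have "\<dots> = (\<Sum>j\<in>UNIV. if j = k then p j $ i * (x - d j) else 0)"
      by (rule sum.cong) auto
    also have "\<dots> = p k $ i * (x - d k)" by simp
    finally show ?thesis using A by simp
  qed
  hence "(mat x - S) ** P = P ** D" by (simp add: vec_eq_iff)
  hence "det (mat x - S) * det P = det P * det D" by (metis det_mul)
  hence "det (mat x - S) = det D" using dP by simp
  also have "det D = (\<Prod>k\<in>UNIV. x - d k)"
    by (subst det_diagonal) (auto simp: D_def)
  finally show ?thesis .
qed



locale lapg =
  fixes E :: "'n::finite \<Rightarrow> 'n \<Rightarrow> bool" and B :: "'n \<Rightarrow> 'n \<Rightarrow> real"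
  assumes E_sym: "\<And>i j. E i j \<Longrightarrow> E j i"
    and E_irrefl: "\<And>i. \<not> E i i"
    and E_conn: "\<And>i j. E\<^sup>*\<^sup>* i j"
    and B_sym: "\<And>i j. B i j = B j i"
    and B_pos: "\<And>i j. E i j \<Longrightarrow> B i j > 0"
begin

definition Lx :: "('n \<Rightarrow> real) \<Rightarrow> 'n \<Rightarrow> real" where
  "Lx x i = (\<Sum>j\<in>{j. E i j}. B i j * (x i - x j))"

definition Qf :: "('n \<Rightarrow> real) \<Rightarrow> ('n \<Rightarrow> real) \<Rightarrow> real" where
  "Qf x y = (\<Sum>i\<in>UNIV. x i * Lx y i)"

lemma swapE: "(\<Sum>i\<in>UNIV. \<Sum>j\<in>{j. E i j}. f i j) = (\<Sum>i\<in>UNIV. \<Sum>j\<in>{j. E i j}. f j i)"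
proof -
  have "(\<Sum>i\<in>UNIV. \<Sum>j\<in>{j. E i j}. f i j) = (\<Sum>i\<in>UNIV. \<Sum>j\<in>{j. j \<in> UNIV \<and> E i j}. f i j)" by simp
  also have "\<dots> = (\<Sum>j\<in>UNIV. \<Sum>i\<in>{i. i \<in> UNIV \<and> E i j}. f i j)"
    by (rule sum.swap_restrict) auto
  also have "\<dots> = (\<Sum>j\<in>UNIV. \<Sum>i\<in>{i. E j i}. f i j)"
    by (rule sum.cong[OF refl], rule sum.cong) (auto intro: E_sym)
  finally show ?thesis .
qed

lemma Qf_half: "Qf x y = (\<Sum>i\<in>UNIV. \<Sum>j\<in>{j. E i j}. B i j * (x i - x j) * (y i - y j)) / 2"
proof -
  have "Qf x y = (\<Sum>i\<in>UNIV. \<Sum>j\<in>{j. E i j}. B i j * x i * (y i - y j))"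
    by (simp add: Qf_def Lx_def sum_distrib_left mult_ac)
  also have "\<dots> = (\<Sum>i\<in>UNIV. \<Sum>j\<in>{j. E i j}. B j i * x j * (y j - y i))"
    by (rule swapE)
  also have "\<dots> = (\<Sum>i\<in>UNIV. \<Sum>j\<in>{j. E i j}. - (B i j * x j * (y i - y j)))"
    by (simp add: B_sym algebra_simps)
  finally have 1: "Qf x y = (\<Sum>i\<in>UNIV. \<Sum>j\<in>{j. E i j}. - (B i j * x j * (y i - y j)))" .
  have "2 * Qf x y = (\<Sum>i\<in>UNIV. \<Sum>j\<in>{j. E i j}. B i j * x i * (y i - y j)) + (\<Sum>i\<in>UNIV. \<Sum>j\<in>{j. E i j}. - (B i j * x j * (y i - y j)))"
    using 1 by (simp add: Qf_def Lx_def sum_distrib_left mult_ac)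
  also have "\<dots> = (\<Sum>i\<in>UNIV. \<Sum>j\<in>{j. E i j}. B i j * (x i - x j) * (y i - y j))"
    by (simp add: sum.distrib[symmetric] algebra_simps)
  finally show ?thesis by simp
qed

lemma Qf_sym: "Qf x y = Qf y x"
  by (simp add: Qf_half mult_ac)

lemma Bterm_nonneg: "E i j \<Longrightarrow> 0 \<le> B i j * a * a"
  using B_pos[of i j] by (simp add: mult.assoc)

lemma Qf_nonneg: "Qf x x \<ge> 0"
  unfolding Qf_half
  by (intro divide_nonneg_pos sum_nonneg) (auto intro!: Bterm_nonneg)

lemma Lx_sum0: "(\<Sum>i\<in>UNIV. Lx x i) = 0"
  using Qf_half[of "\<lambda>_. 1" x] by (simp add: Qf_def)

lemma Lx_shift: "Lx (\<lambda>i. x i + c) = Lx x" "Lx (\<lambda>i. x i - c) = Lx x"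
  by (auto simp: Lx_def fun_eq_iff)

lemma Lx_const: "Lx (\<lambda>i. c) = (\<lambda>i. 0)"
  by (auto simp: Lx_def fun_eq_iff)

lemma Qf_zero_const:
  assumes "Qf x x = 0"
  shows "x i = x j"
proof -
  have terms: "B i j * (x i - x j) * (x i - x j) = 0" if "E i j" for i j
  proof -
    have nn: "\<And>i j. j \<in> {j. E i j} \<Longrightarrow> B i j * (x i - x j) * (x i - x j) \<ge> 0"
      by (auto intro!: Bterm_nonneg)
    have "(\<Sum>i\<in>UNIV. \<Sum>j\<in>{j. E i j}. B i j * (x i - x j) * (x i - x j)) = 0"
      using assms Qf_half by simp
    hence "\<forall>i\<in>UNIV. (\<Sum>j\<in>{j. E i j}. B i j * (x i - x j) * (x i - x j)) = 0"
      by (subst (asm) sum_nonneg_eq_0_iff) (auto intro!: sum_nonneg nn)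
    hence "(\<Sum>j\<in>{j. E i j}. B i j * (x i - x j) * (x i - x j)) = 0" by simp
    hence "\<forall>j\<in>{j. E i j}. B i j * (x i - x j) * (x i - x j) = 0"
      by (subst (asm) sum_nonneg_eq_0_iff) (auto intro!: nn)
    thus ?thesis using that by simp
  qed
  have edge: "x i = x j" if "E i j" for i j
    using terms[OF that] B_pos[OF that] by simp
  have "E\<^sup>*\<^sup>* i j" by (rule E_conn)
  thus ?thesis
    by (induction rule: rtranclp_induct) (auto dest: edge)
qed

end


lemma prod_mset_cont: "isCont (\<lambda>x::real. \<Prod>l\<in>#S. x - l) a"
  by (induction S) (auto intro!: continuous_intros)

lemma mset_prod_unique:
  fixes S T :: "real multiset"
  assumes "\<And>x::real. (\<Prod>l\<in>#S. x - l) = (\<Prod>l\<in>#T. x - l)"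
  shows "S = T"
  using assms
proof (induction S arbitrary: T)
  case empty
  show ?case
  proof (rule ccontr)
    assume "{#} \<noteq> T"
    then obtain a where "a \<in># T" by (metis multiset_nonemptyE)
    hence "(\<Prod>l\<in>#T. a - l) = 0" by (auto simp: prod_mset_zero_iff)
    with empty[of a] show False by simp
  qed
next
  case (add a S)
  have "(\<Prod>l\<in>#T. a - l) = 0" using add.prems[of a] by simp
  then obtain l where "l \<in># T" "a - l = 0" by (auto simp: prod_mset_zero_iff)
  hence aT: "a \<in># T" by simp
  define T' where "T' = T - {#a#}"
  have T: "T = add_mset a T'" using aT by (simp add: T'_def)
  have ne: "(\<Prod>l\<in>#S. x - l) = (\<Prod>l\<in>#T'. x - l)" if "x \<noteq> a" for x
    using add.prems[of x] that by (simp add: T)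
  have "(\<Prod>l\<in>#S. x - l) = (\<Prod>l\<in>#T'. x - l)" for x
  proof (cases "x = a")
    case False then show ?thesis by (rule ne)
  next
    case True
    have f: "((\<lambda>x. \<Prod>l\<in>#S. x - l) \<longlongrightarrow> (\<Prod>l\<in>#S. a - l)) (at a)"
      using prod_mset_cont[where S=S and a=a] by (simp add: isCont_def)
    have g: "((\<lambda>x. \<Prod>l\<in>#T'. x - l) \<longlongrightarrow> (\<Prod>l\<in>#T'. a - l)) (at a)"
      using prod_mset_cont[where S=T' and a=a] by (simp add: isCont_def)
    have "((\<lambda>x. \<Prod>l\<in>#S. x - l) \<longlongrightarrow> (\<Prod>l\<in>#T'. a - l)) (at a)"
      using g by (rule Lim_transform_within[where d=1]) (auto intro: ne[symmetric])
    with f have "(\<Prod>l\<in>#S. a - l) = (\<Prod>l\<in>#T'. a - l)"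
      using tendsto_unique by (metis trivial_limit_at)
    thus ?thesis using True by simp
  qed
  hence "S = T'" by (rule add.IH)
  thus ?case by (simp add: T)
qed

locale lapM = lapg E B for E :: "'n::finite \<Rightarrow> 'n \<Rightarrow> bool" and B +
  fixes M :: "'n \<Rightarrow> real"
  assumes M_pos: "\<And>i. M i > 0" and N2: "CARD('n) \<ge> 2"
begin

lemma sum_if_left: "(\<Sum>k\<in>(UNIV::'n set). (if i = k then a k else 0) * X k) = a i * (X i :: real)"
proof -
  have "(\<Sum>k\<in>(UNIV::'n set). (if i = k then a k else 0) * X k) = (\<Sum>k\<in>UNIV. if i = k then a k * X k else 0)"
    by (rule sum.cong) auto
  thus ?thesis by (simp add: sum.delta sum.delta')
qed

lemma sum_if_right: "(\<Sum>k\<in>(UNIV::'n set). X k * (if k = j then a k else 0)) = X j * (a j :: real)"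
proof -
  have "(\<Sum>k\<in>(UNIV::'n set). X k * (if k = j then a k else 0)) = (\<Sum>k\<in>UNIV. if k = j then X k * a k else 0)"
    by (rule sum.cong) auto
  thus ?thesis by (simp add: sum.delta sum.delta')
qed

lemma Lx_mat: "Lx x i = (\<Sum>j\<in>UNIV. laplacian E B $ i $ j * x j)"
proof -
  have split: "laplacian E B $ i $ j * x j = (if i = j then (\<Sum>k\<in>{k. E i k}. B i k) else 0) * x j + (if E i j then - B i j * x j else 0)" for j
    using E_irrefl[of i] by (auto simp: laplacian_def)
  have "(\<Sum>j\<in>UNIV. laplacian E B $ i $ j * x j)
      = (\<Sum>j\<in>UNIV. (if i = j then (\<Sum>k\<in>{k. E i k}. B i k) else 0) * x j) + (\<Sum>j\<in>UNIV. if E i j then - B i j * x j else 0)"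
    by (simp only: split sum.distrib)
  also have "\<dots> = (\<Sum>k\<in>{k. E i k}. B i k) * x i - (\<Sum>j\<in>{j. E i j}. B i j * x j)"
    by (simp only: sum_if_left) (simp add: sum.inter_filter[symmetric] sum_negf)
  also have "\<dots> = Lx x i"
    by (simp add: Lx_def right_diff_distrib sum_subtractf sum_distrib_left mult.commute)
  finally show ?thesis by simp
qed

definition Ssym :: "real^'n^'n" where
  "Ssym = (\<chi> i j. laplacian E B $ i $ j / (sqrt (M i) * sqrt (M j)))"

definition xs :: "real^'n \<Rightarrow> 'n \<Rightarrow> real" where
  "xs y = (\<lambda>i. y $ i / sqrt (M i))"

lemma sqrtM_pos: "sqrt (M i) > 0" using M_pos by simp

lemma Mnz: "M i \<noteq> 0" using M_pos[of i] by simp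

lemma lap_sym: "laplacian E B $ i $ j = laplacian E B $ j $ i"
  by (auto simp: laplacian_def B_sym intro: E_sym)

lemma Ssym_sym: "transpose Ssym = Ssym"
  by (simp add: vec_eq_iff transpose_def Ssym_def lap_sym mult.commute)

lemma quad: "y \<bullet> (Ssym *v y) = Qf (xs y) (xs y)"
proof -
  have "y \<bullet> (Ssym *v y) = (\<Sum>i\<in>UNIV. \<Sum>j\<in>UNIV. y $ i * (laplacian E B $ i $ j / (sqrt (M i) * sqrt (M j))) * y $ j)"
    by (simp add: inner_vec_def matrix_vector_mult_def Ssym_def sum_distrib_left mult_ac)
  also have "\<dots> = (\<Sum>i\<in>UNIV. \<Sum>j\<in>UNIV. xs y i * (laplacian E B $ i $ j * xs y j))"
    by (intro sum.cong refl) (simp add: xs_def)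
  also have "\<dots> = Qf (xs y) (xs y)"
    by (simp add: Qf_def Lx_mat sum_distrib_left)
  finally show ?thesis .
qed

definition u0 :: "real^'n" where "u0 = (\<chi> i. sqrt (M i))"

lemma Ssym_u0: "Ssym *v u0 = 0"
proof -
  have "(Ssym *v u0) $ i = Lx (\<lambda>_. 1) i / sqrt (M i)" for i
  proof -
    have "(Ssym *v u0) $ i = (\<Sum>j\<in>UNIV. laplacian E B $ i $ j / (sqrt (M i) * sqrt (M j)) * sqrt (M j))"
      by (simp add: matrix_vector_mult_def Ssym_def u0_def)
    also have "\<dots> = (\<Sum>j\<in>UNIV. laplacian E B $ i $ j * 1 / sqrt (M i))"
      using sqrtM_pos by (intro sum.cong refl) (simp add: field_simps Mnz)
    also have "\<dots> = Lx (\<lambda>_. 1) i / sqrt (M i)"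
      by (simp add: Lx_mat sum_divide_distrib)
    finally show ?thesis .
  qed
  thus ?thesis by (simp add: vec_eq_iff Lx_const)
qed

lemma u0_nz: "u0 \<noteq> 0"
proof
  assume "u0 = 0"
  hence "u0 $ undefined = 0" by simp
  thus False using sqrtM_pos[of undefined] by (simp add: u0_def)
qed

lemma ker_u0:
  assumes "Ssym *v y = 0"
  shows "\<exists>c. y = c *\<^sub>R u0"
proof -
  have "Qf (xs y) (xs y) = 0" using quad[of y] assms by simp
  hence c: "xs y i = xs y j" for i j by (rule Qf_zero_const)
  obtain i0 :: 'n where True by simp
  have "y $ i = xs y i0 * u0 $ i" for i
  proof -
    have "y $ i / sqrt (M i) = xs y i0" using c[of i i0] by (simp add: xs_def)
    thus ?thesis using sqrtM_pos[of i] by (simp add: u0_def divide_eq_eq mult.commute)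
  qed
  hence "y = xs y i0 *\<^sub>R u0" by (simp add: vec_eq_iff)
  thus ?thesis by blast
qed

lemma det_similar: "det (mat x - scaled_laplacian M E B) = det (mat x - Ssym)"
proof -
  define D :: "real^'n^'n" where "D = (\<chi> i j. if i = j then sqrt (M i) else 0)"
  have "(D ** (mat x - scaled_laplacian M E B)) $ i $ j = ((mat x - Ssym) ** D) $ i $ j" for i j
  proof -
    have "(D ** (mat x - scaled_laplacian M E B)) $ i $ j
        = (\<Sum>k\<in>UNIV. (if i = k then sqrt (M i) else 0) * ((mat x - scaled_laplacian M E B) $ k $ j))"
      by (simp add: matrix_matrix_mult_def D_def)
    also have "\<dots> = sqrt (M i) * ((mat x - scaled_laplacian M E B) $ i $ j)" by (rule sum_if_left[where a="\<lambda>_. sqrt (M i)"])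
    also have "\<dots> = sqrt (M i) * ((if i = j then x else 0) - laplacian E B $ i $ j / M i)"
      by (simp add: mat_def scaled_laplacian_def)
    finally have A: "(D ** (mat x - scaled_laplacian M E B)) $ i $ j = sqrt (M i) * ((if i = j then x else 0) - laplacian E B $ i $ j / M i)" .
    have "((mat x - Ssym) ** D) $ i $ j = (\<Sum>k\<in>UNIV. ((mat x - Ssym) $ i $ k) * (if k = j then sqrt (M k) else 0))"
      by (simp add: matrix_matrix_mult_def D_def)
    also have "\<dots> = ((mat x - Ssym) $ i $ j) * sqrt (M j)" by (rule sum_if_right[where a="\<lambda>k. sqrt (M k)"])
    also have "\<dots> = ((if i = j then x else 0) - laplacian E B $ i $ j / (sqrt (M i) * sqrt (M j))) * sqrt (M j)"
      by (simp add: mat_def Ssym_def)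
    finally have B: "((mat x - Ssym) ** D) $ i $ j = ((if i = j then x else 0) - laplacian E B $ i $ j / (sqrt (M i) * sqrt (M j))) * sqrt (M j)" .
    have "sqrt (M i) * sqrt (M i) = M i" using M_pos[of i] by simp
    thus ?thesis unfolding A B using sqrtM_pos[of i] sqrtM_pos[of j] M_pos[of i]
      by (auto simp: field_simps)
  qed
  hence "D ** (mat x - scaled_laplacian M E B) = (mat x - Ssym) ** D" by (simp add: vec_eq_iff)
  hence "det D * det (mat x - scaled_laplacian M E B) = det (mat x - Ssym) * det D" by (metis det_mul)
  moreover have "det D = (\<Prod>i\<in>UNIV. sqrt (M i))" by (subst det_diagonal) (auto simp: D_def)
  moreover have "(\<Prod>i\<in>UNIV. sqrt (M i)) \<noteq> 0" using sqrtM_pos by (simp add: prod_zero_iff) (metis less_irrefl)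
  ultimately show ?thesis by simp
qed

lemma lambda2_props:
  shows "lambda2 M E B > 0"
    and "\<And>x. (\<Sum>i\<in>UNIV. M i * x i) = 0 \<Longrightarrow> lambda2 M E B * (\<Sum>i\<in>UNIV. M i * (x i)^2) \<le> Qf x x"
proof -
  obtain p :: "'n \<Rightarrow> real^'n" and d where on: "\<And>k l. p k \<bullet> p l = (if k = l then 1 else 0)"
    and eig: "\<And>k. Ssym *v p k = d k *\<^sub>R p k"
    using spectral[OF Ssym_sym] by blast
  have expand: "y = (\<Sum>k\<in>UNIV. (y \<bullet> p k) *\<^sub>R p k)" for y by (rule onb_expand[OF on])
  have Sy: "Ssym *v y = (\<Sum>k\<in>UNIV. ((y \<bullet> p k) * d k) *\<^sub>R p k)" for y
  proof -
    have "Ssym *v y = Ssym *v (\<Sum>k\<in>UNIV. (y \<bullet> p k) *\<^sub>R p k)" using expand[of y] by simp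
    also have "\<dots> = (\<Sum>k\<in>UNIV. (y \<bullet> p k) *\<^sub>R (Ssym *v p k))"
      by (simp add: linear_sum[OF matrix_vector_mul_linear] comp_def matrix_vector_mult_scaleR)
    finally show ?thesis by (simp add: eig)
  qed
  have dotp: "(\<Sum>k\<in>UNIV. c k *\<^sub>R p k) \<bullet> p l = c l" for c l
  proof -
    have "(\<Sum>k\<in>UNIV. c k *\<^sub>R p k) \<bullet> p l = (\<Sum>k\<in>UNIV. c k * (p k \<bullet> p l))" by (simp add: inner_sum_left)
    also have "\<dots> = (\<Sum>k\<in>UNIV. if k = l then c k else 0)" by (rule sum.cong) (auto simp: on)
    finally show ?thesis by simp
  qed
  have parse: "y \<bullet> (\<Sum>k\<in>UNIV. c k *\<^sub>R p k) = (\<Sum>k\<in>UNIV. c k * (y \<bullet> p k))" for y c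
    by (simp add: inner_sum_right mult.commute)
  have quadS: "y \<bullet> (Ssym *v y) = (\<Sum>k\<in>UNIV. d k * (y \<bullet> p k)^2)" for y
    by (simp add: Sy parse power2_eq_square mult_ac)
  have norm2: "y \<bullet> y = (\<Sum>k\<in>UNIV. (y \<bullet> p k)^2)" for y
    using parse[of y "\<lambda>k. y \<bullet> p k"] expand[of y] by (simp add: power2_eq_square)
  have dnn: "d k \<ge> 0" for k
  proof -
    have "p k \<bullet> (Ssym *v p k) = d k" using on[of k k] by (simp add: eig)
    thus ?thesis using quad[of "p k"] Qf_nonneg[of "xs (p k)"] by simp
  qed
  have zero_ex: "\<exists>k0. d k0 = 0"
  proof (rule ccontr)
    assume "\<not> ?thesis"
    hence dnz: "d k \<noteq> 0" for k by auto
    have "(u0 \<bullet> p l) * d l = 0" for l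
      using dotp[of "\<lambda>k. (u0 \<bullet> p k) * d k" l] Sy[of u0] Ssym_u0 by simp
    hence "u0 \<bullet> p l = 0" for l using dnz by simp
    hence "u0 = 0" using expand[of u0] by simp
    thus False using u0_nz by simp
  qed
  then obtain k0 where k0: "d k0 = 0" by blast
  have zero_vec: "\<exists>c. p k = c *\<^sub>R u0" if "d k = 0" for k
    using ker_u0[of "p k"] eig[of k] that by simp
  have uniq: "k = k0" if dk: "d k = 0" for k
  proof (rule ccontr)
    assume "k \<noteq> k0"
    obtain c1 where c1: "p k = c1 *\<^sub>R u0" using zero_vec[OF dk] by blast
    obtain c2 where c2: "p k0 = c2 *\<^sub>R u0" using zero_vec[OF k0] by blast
    have "p k \<bullet> p k = 1" using on by simp
    hence "c1 \<noteq> 0" using c1 by auto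
    have "p k0 \<bullet> p k0 = 1" using on by simp
    hence "c2 \<noteq> 0" using c2 by auto
    have "p k \<bullet> p k0 = 0" using on \<open>k \<noteq> k0\<close> by simp
    hence "c1 * c2 * (u0 \<bullet> u0) = 0" using c1 c2 by simp blast
    thus False using \<open>c1 \<noteq> 0\<close> \<open>c2 \<noteq> 0\<close> u0_nz by simp
  qed
  have dpos: "d k > 0" if "k \<noteq> k0" for k using dnn[of k] uniq[of k] that by force
  define R where "R = image_mset d (mset_set (UNIV - {k0}))"
  have chi: "det (mat x - scaled_laplacian M E B) = (\<Prod>l\<in># image_mset d (mset_set UNIV). x - l)" for x
  proof -
    have "(\<Prod>k\<in>UNIV. x - d k) = (\<Prod>l\<in># image_mset d (mset_set UNIV). x - l)"
      by (subst prod_unfold_prod_mset) (simp add: multiset.map_comp comp_def)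
    thus ?thesis using det_similar spectral_det[OF on eig] by simp
  qed
  have ev: "eigenvalues_mset (scaled_laplacian M E B) = image_mset d (mset_set UNIV)"
    unfolding eigenvalues_mset_def
  proof (rule the_equality)
    show "\<forall>x. det (mat x - scaled_laplacian M E B) = (\<Prod>l\<in># image_mset d (mset_set UNIV). x - l)" using chi by blast
  next
    fix S assume "\<forall>x. det (mat x - scaled_laplacian M E B) = (\<Prod>l\<in>#S. x - l)"
    thus "S = image_mset d (mset_set UNIV)" using chi by (intro mset_prod_unique) simp
  qed
  have "mset_set (UNIV::'n set) = add_mset k0 (mset_set (UNIV - {k0}))"
    by (metis finite insert_UNIV mset_set.insert_remove)
  hence ev2: "eigenvalues_mset (scaled_laplacian M E B) = add_mset 0 R"
    using ev k0 by (simp add: R_def)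
  have Rpos: "\<forall>l\<in>set_mset R. l > 0" using dpos by (auto simp: R_def)
  have "UNIV - {k0} \<noteq> {}"
  proof
    assume "UNIV - {k0} = {}"
    hence "(UNIV::'n set) = {k0}" by auto
    hence "card (UNIV::'n set) = card {k0}" by simp
    thus False using N2 by simp
  qed
  hence Rne: "R \<noteq> {#}" by (simp add: R_def mset_set_empty_iff)
  define xsR where "xsR = sorted_list_of_multiset R"
  have "sorted_list_of_multiset (add_mset 0 R) = 0 # xsR"
    using Rpos by (simp add: xsR_def insort_is_Cons less_imp_le)
  hence l2: "lambda2 M E B = xsR ! 0"
    by (simp add: lambda2_def kth_smallest_eigenvalue_def ev2)
  have xsne: "xsR \<noteq> []"
  proof
    assume "xsR = []"
    hence "mset xsR = {#}" by simp
    thus False using Rne by (simp add: xsR_def)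
  qed
  hence "xsR ! 0 \<in> set xsR" by simp
  hence "xsR ! 0 \<in> set_mset R" by (simp add: xsR_def)
  thus l2pos: "lambda2 M E B > 0" using Rpos l2 by auto
  have l2min: "lambda2 M E B \<le> d k" if "k \<noteq> k0" for k
  proof -
    have "d k \<in> set xsR" using that by (simp add: xsR_def R_def)
    then obtain j where j: "j < length xsR" "xsR ! j = d k" by (metis in_set_conv_nth)
    have "sorted xsR" by (simp add: xsR_def)
    hence "xsR ! 0 \<le> xsR ! j" using j sorted_iff_nth_mono by blast
    thus ?thesis using j l2 by simp
  qed
  fix x :: "'n \<Rightarrow> real"
  assume x0: "(\<Sum>i\<in>UNIV. M i * x i) = 0"
  define y :: "real^'n" where "y = (\<chi> i. sqrt (M i) * x i)"
  have xsy: "xs y = x" using sqrtM_pos by (simp add: fun_eq_iff xs_def y_def Mnz)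
  have yu0: "y \<bullet> u0 = 0"
  proof -
    have "y \<bullet> u0 = (\<Sum>i\<in>UNIV. M i * x i)"
      unfolding inner_vec_def
    proof (intro sum.cong refl)
      fix i
      have "y $ i * u0 $ i = (sqrt (M i))^2 * x i" by (simp add: y_def u0_def power2_eq_square mult_ac)
      thus "y $ i \<bullet> u0 $ i = M i * x i" using M_pos[of i] by (simp add: inner_real_def)
    qed
    thus ?thesis using x0 by simp
  qed
  have yk0: "y \<bullet> p k0 = 0"
  proof -
    obtain c where "p k0 = c *\<^sub>R u0" using zero_vec[OF k0] by blast
    thus ?thesis using yu0 by simp
  qed
  have yy: "y \<bullet> y = (\<Sum>i\<in>UNIV. M i * (x i)^2)"
    unfolding inner_vec_def
  proof (intro sum.cong refl)
    fix i
    have "y $ i * y $ i = (sqrt (M i))^2 * (x i)^2" by (simp add: y_def power2_eq_square mult_ac)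
    thus "y $ i \<bullet> y $ i = M i * (x i)^2" using M_pos[of i] by (simp add: inner_real_def)
  qed
  have "lambda2 M E B * (y \<bullet> y) = (\<Sum>k\<in>UNIV. lambda2 M E B * (y \<bullet> p k)^2)"
    by (simp add: norm2 sum_distrib_left)
  also have "\<dots> \<le> (\<Sum>k\<in>UNIV. d k * (y \<bullet> p k)^2)"
  proof (rule sum_mono)
    fix k show "lambda2 M E B * (y \<bullet> p k)^2 \<le> d k * (y \<bullet> p k)^2"
      by (cases "k = k0") (auto simp: yk0 intro!: mult_right_mono l2min)
  qed
  also have "\<dots> = Qf x x" using quadS[of y] quad[of y] xsy by simp
  finally show "lambda2 M E B * (\<Sum>i\<in>UNIV. M i * (x i)^2) \<le> Qf x x" using yy by simp
qed

end





lemma amgm_abs: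
  fixes p q x y :: real
  assumes "p > 0"
  shows "q * \<bar>x\<bar> * \<bar>y\<bar> \<le> q^2 / (2 * p) * x^2 + p / 2 * y^2"
proof -
  have "0 \<le> (q * \<bar>x\<bar> - p * \<bar>y\<bar>)^2" by simp
  hence "2 * p * (q * \<bar>x\<bar> * \<bar>y\<bar>) \<le> q^2 * x^2 + p^2 * y^2"
    by (simp add: power2_eq_square algebra_simps)
  hence "q * \<bar>x\<bar> * \<bar>y\<bar> \<le> (q^2 * x^2 + p^2 * y^2) / (2 * p)"
    using assms by (simp add: le_divide_eq mult_ac)
  also have "\<dots> = q^2 / (2 * p) * x^2 + p / 2 * y^2"
    using assms by (simp add: field_simps power2_eq_square)
  finally show ?thesis .
qed

lemma pw_bound:
  fixes Dl eps lam L mu cc z e g C :: real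
  assumes "mu \<le> Dl" "Dl \<le> L" "0 < eps" "eps \<le> mu" "lam > 0" "mu > 0" "\<bar>g\<bar> \<le> C"
    and const: "eps + eps * L^2 / (2 * lam) + cc / 2 \<le> 5 * mu / 8"
  shows "- (Dl - eps) * z^2 + eps * (Dl - eps) * z * e + z * g
         \<le> - (cc / 2) * z^2 + (eps * lam / 2) * e^2 + 2 / (3 * mu) * C^2"
proof -
  have L0: "L \<ge> 0" using assms by linarith
  have A: "(Dl - eps) * z * e \<le> L * \<bar>z\<bar> * \<bar>e\<bar>"
  proof -
    have "(Dl - eps) * z * e \<le> \<bar>(Dl - eps) * z * e\<bar>" by simp
    also have "\<dots> = (Dl - eps) * \<bar>z\<bar> * \<bar>e\<bar>" using assms by (simp add: abs_mult)
    also have "\<dots> \<le> L * \<bar>z\<bar> * \<bar>e\<bar>"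
      using assms by (intro mult_right_mono) auto
    finally show ?thesis .
  qed
  have A2: "L * \<bar>z\<bar> * \<bar>e\<bar> \<le> L^2 / (2 * lam) * z^2 + lam / 2 * e^2"
    using amgm_abs[OF \<open>lam > 0\<close>] by simp
  define P where "P = L^2 / (2 * lam)"
  define R where "R = lam / 2"
  have A2': "L * \<bar>z\<bar> * \<bar>e\<bar> \<le> P * z^2 + R * e^2" using A2 by (simp add: P_def R_def)
  have A3: "eps * ((Dl - eps) * z * e) \<le> eps * (P * z^2 + R * e^2)"
    using A A2' \<open>0 < eps\<close> by (intro mult_left_mono) auto
  have B: "z * g \<le> 3 * mu / 8 * z^2 + 2 / (3 * mu) * C^2"
  proof -
    have "z * g \<le> \<bar>z\<bar> * C"
      using assms(7) by (metis abs_ge_self abs_ge_zero abs_mult dual_order.trans mult_left_mono)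
    also have "\<bar>z\<bar> * C \<le> 3 * mu / 8 * z^2 + 2 / (3 * mu) * C^2"
    proof -
      have "0 \<le> (3 * mu / 8) * (\<bar>z\<bar> - 4 * C / (3 * mu))^2" using assms by simp
      also have "\<dots> = 3 * mu / 8 * z^2 - \<bar>z\<bar> * C + 2 / (3 * mu) * C^2"
        using assms by (simp add: power2_eq_square field_simps)
      finally show ?thesis by simp
    qed
    finally show ?thesis .
  qed
  have C1: "- (Dl - eps) * z^2 \<le> - (mu - eps) * z^2"
    using assms by (intro mult_right_mono) auto
  have K: "(- (mu - eps) + eps * P + 3 * mu / 8) * z^2 \<le> - (cc / 2) * z^2"
  proof -
    have "eps * P = eps * L^2 / (2 * lam)" by (simp add: P_def)
    hence "- (mu - eps) + eps * P + 3 * mu / 8 \<le> - (cc / 2)" using const by linarith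
    thus ?thesis by (intro mult_right_mono) auto
  qed
  have goal: "- (Dl - eps) * z^2 + eps * ((Dl - eps) * z * e) + z * g
         \<le> - (cc / 2) * z^2 + (eps * R) * e^2 + 2 / (3 * mu) * C^2"
    using A3 B C1 K by (simp add: algebra_simps)
  thus ?thesis by (simp add: R_def mult_ac)
qed


context lapg begin

lemma Lx_lin: "Lx (\<lambda>i. x i + c * y i) i = Lx x i + c * Lx y i"
proof -
  have "Lx (\<lambda>i. x i + c * y i) i = (\<Sum>j\<in>{j. E i j}. B i j * (x i - x j) + c * (B i j * (y i - y j)))"
    unfolding Lx_def by (rule sum.cong) (auto simp: algebra_simps)
  thus ?thesis by (simp add: Lx_def sum.distrib sum_distrib_left)
qed

lemma Qf_lin1: "Qf (\<lambda>i. x i + c * y i) w = Qf x w + c * Qf y w"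
  by (simp add: Qf_def sum.distrib sum_distrib_left algebra_simps)

lemma Qf_shift2: "Qf x (\<lambda>i. y i - c) = Qf x y"
  by (simp add: Qf_def Lx_shift)

lemma Lx_deriv:
  assumes "\<And>i. ((\<lambda>s. x s i) has_real_derivative x' i) (at t)"
  shows "((\<lambda>s. Lx (x s) i) has_real_derivative Lx x' i) (at t)"
  unfolding Lx_def
  by (rule DERIV_sum, rule DERIV_cmult, rule DERIV_diff, rule assms, rule assms)

lemma Qf_deriv:
  assumes d: "\<And>i. ((\<lambda>s. x s i) has_real_derivative x' i) (at t)"
  shows "((\<lambda>s. Qf (x s) (x s)) has_real_derivative (2 * Qf (x t) x')) (at t)"
proof -
  have "((\<lambda>s. Qf (x s) (x s)) has_real_derivative (\<Sum>i\<in>UNIV. x' i * Lx (x t) i + Lx x' i * x t i)) (at t)"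
    unfolding Qf_def
    by (rule DERIV_sum, rule DERIV_mult, rule d, rule Lx_deriv[OF d])
  moreover have "(\<Sum>i\<in>UNIV. x' i * Lx (x t) i + Lx x' i * x t i) = Qf x' (x t) + Qf (x t) x'"
    by (simp add: Qf_def sum.distrib mult.commute)
  ultimately show ?thesis using Qf_sym[of x' "x t"] by simp
qed

end


locale pn = lapM E B M for E :: "'n::finite \<Rightarrow> 'n \<Rightarrow> bool" and B M +
  fixes f f' :: "'n \<Rightarrow> real \<Rightarrow> real"
    and \<xi> \<xi>' :: "real \<Rightarrow> 'n \<Rightarrow> real"
    and \<xi>0m \<xi>0p :: "'n \<Rightarrow> real"
    and \<theta> \<omega> :: "real \<Rightarrow> 'n \<Rightarrow> real"
    and \<omega>b :: "real \<Rightarrow> real"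
    and \<mu> L :: real
  assumes f_deriv: "\<And>i w. (f i has_real_derivative f' i w) (at w)"
    and mu_pos: "\<mu> > 0" and L_pos: "L > 0"
    and f'_bounds: "\<And>i w. - L \<le> f' i w / M i \<and> f' i w / M i \<le> - \<mu>"
    and \<xi>_deriv: "\<And>i t. t > 0 \<Longrightarrow> ((\<lambda>s. \<xi> s i) has_real_derivative \<xi>' t i) (at t)"
    and \<xi>0p_lim: "\<And>i. ((\<lambda>t. \<xi> t i) \<longlongrightarrow> \<xi>0p i) (at_right 0)"
    and \<theta>_cont: "\<And>i. continuous_on {0..} (\<lambda>t. \<theta> t i)"
    and \<omega>_cont: "\<And>i. continuous_on {0..} (\<lambda>t. \<omega> t i)"
    and \<theta>_ode: "\<And>i t. t > 0 \<Longrightarrow> ((\<lambda>s. \<theta> s i) has_real_derivative \<omega> t i) (at t)"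
    and \<omega>_ode: "\<And>i t. t > 0 \<Longrightarrow> ((\<lambda>s. \<omega> s i) has_real_derivative
        (f i (\<omega> t i) + \<xi> t i - (\<Sum>j\<in>{j. E i j}. B i j * (\<theta> t i - \<theta> t j))) / M i) (at t)"
    and \<omega>b_cont: "continuous_on {0..} \<omega>b"
    and \<omega>b_ode: "\<And>t. t > 0 \<Longrightarrow> (\<omega>b has_real_derivative
        ((\<Sum>i\<in>UNIV. f i (\<omega>b t)) / real CARD('n) + (\<Sum>i\<in>UNIV. \<xi> t i) / real CARD('n))
          / ((\<Sum>i\<in>UNIV. M i) / real CARD('n))) (at t)"
    and \<omega>b_init: "\<omega>b 0 = (\<Sum>i\<in>UNIV. M i * \<omega> 0 i) / (\<Sum>i\<in>UNIV. M i)"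
    and steady1: "\<And>i. 0 = f i (\<omega> 0 i) + \<xi>0m i - (\<Sum>j\<in>{j. E i j}. B i j * (\<theta> 0 i - \<theta> 0 j))"
    and steady2: "\<And>i j. E i j \<Longrightarrow> 0 = \<omega> 0 i - \<omega> 0 j"
    and C_finite: "\<And>i. bdd_above ((\<lambda>t. \<bar>\<xi>' t i\<bar> / M i) ` {0<..})"
begin

definition "m = (\<Sum>i\<in>UNIV. M i)"
definition "ob t = (\<Sum>i\<in>UNIV. M i * \<omega> t i) / m"
definition "e t i = \<omega> t i - ob t"
definition "u t i = (f i (\<omega> t i) + \<xi> t i - Lx (\<theta> t) i) / M i"
definition "ud t i = (f' i (\<omega> t i) * u t i + \<xi>' t i - Lx (\<omega> t) i) / M i"
definition "obd t = (\<Sum>i\<in>UNIV. M i * u t i) / m"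
definition "lam = lambda2 M E B"
definition "th = lam / (lam + 4 * L^2)"
definition "eps = \<mu> * th / 2"
definition "c = \<mu> * th / 4"
definition "NN = real (card {i. M i > 0})"
definition "Q = 16 * NN * L^2 / (3 * \<mu>^2) * (1 + 4 * L^2 / lam)"
definition "kap = m * lam / (2 * (Q + 1))"
definition "z t i = u t i + eps * e t i"
definition "V t = Qf (e t) (e t) / 2 + (\<Sum>i\<in>UNIV. M i * (z t i)^2) / 2"
definition "s t = ob t - \<omega>b t"
definition "W t = V t + kap * (s t)^2"
definition "Cc = Max (range (\<lambda>i. Sup ((\<lambda>s. \<bar>\<xi>' s i\<bar> / M i) ` {0<..})))"
definition "F = 2 * m * Cc^2 / (3 * \<mu>)"

lemma m_pos: "m > 0"
  unfolding m_def using M_pos by (simp add: sum_pos)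

lemma lam_pos: "lam > 0" using lambda2_props(1) by (simp add: lam_def)

lemma rayleigh: "(\<Sum>i\<in>UNIV. M i * x i) = 0 \<Longrightarrow> lam * (\<Sum>i\<in>UNIV. M i * (x i)^2) \<le> Qf x x"
  using lambda2_props(2) by (simp add: lam_def)

lemma den_pos: "lam + 4 * L^2 > 0" using lam_pos by (simp add: add_pos_nonneg)

lemma th_pos: "th > 0" unfolding th_def by (rule divide_pos_pos[OF lam_pos den_pos])

lemma th_le1: "th \<le> 1" unfolding th_def using den_pos by (simp add: divide_le_eq_1)

lemma eps_pos: "eps > 0" and c_pos: "c > 0"
  using th_pos mu_pos by (auto simp: eps_def c_def)

lemma e_sum: "(\<Sum>i\<in>UNIV. M i * e t i) = 0"
proof -
  have "(\<Sum>i\<in>UNIV. M i * e t i) = (\<Sum>i\<in>UNIV. M i * \<omega> t i) - m * ob t"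
    by (simp add: e_def right_diff_distrib sum_subtractf m_def sum_distrib_right)
  also have "\<dots> = 0" using m_pos by (simp add: ob_def)
  finally show ?thesis .
qed

lemma Delta_bounds: "\<mu> * M i \<le> - f' i w" "- f' i w \<le> L * M i"
  using f'_bounds[of i w] M_pos[of i] by (auto simp: divide_le_eq le_divide_eq)

lemma f_mono: "(f i x - f i y) * (x - y) \<le> - \<mu> * M i * (x - y)^2"
proof -
  have gen: "(f i b - f i a) * (b - a) \<le> - \<mu> * M i * (b - a)^2" if "a < b" for a b
  proof -
    have "\<exists>w>a. w < b \<and> f i b - f i a = (b - a) * f' i w"
      by (rule MVT2[OF that]) (rule f_deriv)
    then obtain w where "f i b - f i a = (b - a) * f' i w" by blast
    hence "(f i b - f i a) * (b - a) = f' i w * (b - a)^2" by (simp add: power2_eq_square)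
    also have "\<dots> \<le> - \<mu> * M i * (b - a)^2"
      using Delta_bounds(1)[of i w] by (intro mult_right_mono) auto
    finally show ?thesis .
  qed
  show ?thesis
  proof (cases x y rule: linorder_cases)
    case less then show ?thesis using gen[OF less] by (simp add: power2_commute algebra_simps)
  next
    case equal then show ?thesis by simp
  next
    case greater then show ?thesis using gen[OF greater] by simp
  qed
qed

lemma f_lip: "\<bar>f i x - f i y\<bar> \<le> L * M i * \<bar>x - y\<bar>"
proof -
  have gen: "\<bar>f i b - f i a\<bar> \<le> L * M i * \<bar>b - a\<bar>" if "a < b" for a b
  proof -
    have "\<exists>w>a. w < b \<and> f i b - f i a = (b - a) * f' i w"
      by (rule MVT2[OF that]) (rule f_deriv)
    then obtain w where "f i b - f i a = (b - a) * f' i w" by blast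
    hence "\<bar>f i b - f i a\<bar> = \<bar>f' i w\<bar> * \<bar>b - a\<bar>" by (simp add: abs_mult)
    also have "\<dots> \<le> L * M i * \<bar>b - a\<bar>"
    proof (rule mult_right_mono)
      have "0 < \<mu> * M i" using mu_pos M_pos[of i] by simp
      hence "f' i w < 0" using Delta_bounds(1)[of i w] by linarith
      thus "\<bar>f' i w\<bar> \<le> L * M i" using Delta_bounds(2)[of i w] by simp
    qed simp
    finally show ?thesis .
  qed
  show ?thesis
  proof (cases x y rule: linorder_cases)
    case less then show ?thesis using gen[OF less] by (simp add: abs_minus_commute)
  next
    case equal then show ?thesis by simp
  next
    case greater then show ?thesis using gen[OF greater] by simp
  qed
qed


lemma Mnz': "M i \<noteq> 0" using M_pos[of i] by simp

lemma NN_set: "{i. M i > 0} = UNIV" using M_pos by auto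

lemma N_pos: "NN > 0" unfolding NN_def NN_set by simp

lemma N_ge2: "NN \<ge> 2" unfolding NN_def NN_set using N2 by simp

lemma d_omega: "t > 0 \<Longrightarrow> ((\<lambda>s. \<omega> s i) has_real_derivative u t i) (at t)"
  using \<omega>_ode[of t i] by (simp add: u_def Lx_def)

lemma d_theta_all: "t > 0 \<Longrightarrow> \<forall>j. ((\<lambda>s. \<theta> s j) has_real_derivative \<omega> t j) (at t)"
  using \<theta>_ode by blast

lemma d_u: assumes t: "t > 0" shows "((\<lambda>s. u s i) has_real_derivative ud t i) (at t)"
proof -
  have 1: "((\<lambda>s. f i (\<omega> s i)) has_real_derivative f' i (\<omega> t i) * u t i) (at t)"
    by (rule DERIV_chain2[OF f_deriv d_omega[OF t]])
  have 2: "((\<lambda>s. Lx (\<theta> s) i) has_real_derivative Lx (\<omega> t) i) (at t)"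
    by (rule Lx_deriv) (use \<theta>_ode[OF t] in blast)
  have "((\<lambda>s. (f i (\<omega> s i) + \<xi> s i - Lx (\<theta> s) i) / M i) has_real_derivative
          (f' i (\<omega> t i) * u t i + \<xi>' t i - Lx (\<omega> t) i) / M i) (at t)"
    by (intro DERIV_cdivide DERIV_diff DERIV_add 1 2 \<xi>_deriv[OF t])
  thus ?thesis by (simp add: u_def[abs_def] ud_def)
qed

lemma d_ob: assumes t: "t > 0" shows "(ob has_real_derivative obd t) (at t)"
proof -
  have "((\<lambda>s. (\<Sum>i\<in>UNIV. M i * \<omega> s i) / m) has_real_derivative (\<Sum>i\<in>UNIV. M i * u t i) / m) (at t)"
    by (intro DERIV_cdivide DERIV_sum DERIV_cmult d_omega[OF t])
  thus ?thesis by (simp add: ob_def[abs_def] obd_def)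
qed

lemma d_e: assumes t: "t > 0" shows "((\<lambda>s. e s i) has_real_derivative u t i - obd t) (at t)"
  unfolding e_def by (intro DERIV_diff d_omega[OF t] d_ob[OF t])

lemma d_z: assumes t: "t > 0" shows "((\<lambda>s. z s i) has_real_derivative ud t i + eps * (u t i - obd t)) (at t)"
  unfolding z_def by (intro DERIV_add DERIV_cmult d_u[OF t] d_e[OF t])

definition "Vd t = Qf (e t) (\<lambda>i. u t i - obd t) + (\<Sum>i\<in>UNIV. M i * z t i * (ud t i + eps * (u t i - obd t)))"

lemma d_V: assumes t: "t > 0" shows "(V has_real_derivative Vd t) (at t)"
proof -
  have 1: "((\<lambda>s. Qf (e s) (e s)) has_real_derivative 2 * Qf (e t) (\<lambda>i. u t i - obd t)) (at t)"
    by (rule Qf_deriv) (rule d_e[OF t])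
  have z2: "((\<lambda>s. (z s i)^2) has_real_derivative 2 * z t i * (ud t i + eps * (u t i - obd t))) (at t)" for i
    using DERIV_power[OF d_z[OF t, of i], where n=2] by (simp add: mult_ac)
  have 2: "((\<lambda>s. \<Sum>i\<in>UNIV. M i * (z s i)^2) has_real_derivative
            (\<Sum>i\<in>UNIV. M i * (2 * z t i * (ud t i + eps * (u t i - obd t))))) (at t)"
    by (intro DERIV_sum DERIV_cmult z2)
  have "(V has_real_derivative (2 * Qf (e t) (\<lambda>i. u t i - obd t)) / 2 +
            (\<Sum>i\<in>UNIV. M i * (2 * z t i * (ud t i + eps * (u t i - obd t)))) / 2) (at t)"
    unfolding V_def[abs_def] by (intro DERIV_add DERIV_cdivide 1 2)
  moreover have "(2 * Qf (e t) (\<lambda>i. u t i - obd t)) / 2 +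
            (\<Sum>i\<in>UNIV. M i * (2 * z t i * (ud t i + eps * (u t i - obd t)))) / 2 = Vd t"
    by (simp add: Vd_def sum_divide_distrib mult_ac)
  ultimately show ?thesis by simp
qed

definition "wbd t = ((\<Sum>i\<in>UNIV. f i (\<omega>b t)) / NN + (\<Sum>i\<in>UNIV. \<xi> t i) / NN) / ((\<Sum>i\<in>UNIV. M i) / NN)"

lemma wbd_eq: "wbd t = ((\<Sum>i\<in>UNIV. f i (\<omega>b t)) + (\<Sum>i\<in>UNIV. \<xi> t i)) / m"
  using N_pos m_pos by (simp add: wbd_def m_def[symmetric] field_simps)

lemma obd_eq: "obd t = ((\<Sum>i\<in>UNIV. f i (\<omega> t i)) + (\<Sum>i\<in>UNIV. \<xi> t i)) / m"
proof -
  have "(\<Sum>i\<in>UNIV. M i * u t i) = (\<Sum>i\<in>UNIV. f i (\<omega> t i) + \<xi> t i - Lx (\<theta> t) i)"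
    by (intro sum.cong refl) (simp add: u_def Mnz')
  also have "\<dots> = (\<Sum>i\<in>UNIV. f i (\<omega> t i)) + (\<Sum>i\<in>UNIV. \<xi> t i)"
    by (simp add: sum.distrib sum_subtractf Lx_sum0)
  finally show ?thesis by (simp add: obd_def)
qed

definition "Wd t = Vd t + kap * (2 * s t * (obd t - wbd t))"

lemma d_W: assumes t: "t > 0" shows "(W has_real_derivative Wd t) (at t)"
proof -
  have s: "(s has_real_derivative obd t - wbd t) (at t)"
    unfolding s_def[abs_def] using \<omega>b_ode[OF t]
    by (intro DERIV_diff d_ob[OF t]) (simp add: wbd_def NN_def NN_set)
  have "((\<lambda>x. (s x)^2) has_real_derivative 2 * s t * (obd t - wbd t)) (at t)"
    using DERIV_power[OF s, where n=2] by (simp add: mult_ac)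
  hence "(W has_real_derivative Vd t + kap * (2 * s t * (obd t - wbd t))) (at t)"
    unfolding W_def[abs_def] by (intro DERIV_add DERIV_cmult d_V[OF t])
  thus ?thesis by (simp add: Wd_def)
qed

end




context pn begin

lemma const1: "eps + eps * L^2 / (2 * lam) + c / 2 \<le> 5 * \<mu> / 8"
proof -
  have "eps * (2 * (lam + 4 * L^2)) = \<mu> * (lam / (lam + 4 * L^2) * (lam + 4 * L^2))"
    by (simp add: eps_def th_def mult_ac)
  also have "lam / (lam + 4 * L^2) * (lam + 4 * L^2) = lam" using den_pos by simp
  finally have e: "eps * (2 * (lam + 4 * L^2)) = \<mu> * lam" .
  have "eps * (2 * lam + L^2) \<le> eps * (2 * (lam + 4 * L^2))"
    using eps_pos by (intro mult_left_mono) auto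
  hence le: "eps * (2 * lam + L^2) \<le> \<mu> * lam" using e by simp
  have "eps + eps * L^2 / (2 * lam) = eps * (2 * lam + L^2) / (2 * lam)"
    using lam_pos by (simp add: field_simps)
  also have "\<dots> \<le> \<mu> * lam / (2 * lam)"
    using le lam_pos by (intro divide_right_mono) auto
  also have "\<dots> = \<mu> / 2" using lam_pos by simp
  finally have A: "eps + eps * L^2 / (2 * lam) \<le> \<mu> / 2" .
  have "c / 2 \<le> \<mu> / 8" using th_le1 mu_pos by (simp add: c_def)
  with A show ?thesis by linarith
qed

lemma th_inv: "th * (1 + 4 * L^2 / lam) = 1"
proof -
  have "1 + 4 * L^2 / lam = (lam + 4 * L^2) / lam" using lam_pos by (simp add: field_simps)
  thus ?thesis using lam_pos den_pos by (simp add: th_def)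
qed

lemma Q_eq: "\<mu>^2 * th * Q = 16 * NN * L^2 / 3"
proof -
  have "\<mu>^2 * th * Q = 16 * NN * L^2 / 3 * (th * (1 + 4 * L^2 / lam))"
    using mu_pos by (simp add: Q_def field_simps)
  thus ?thesis using th_inv by simp
qed

lemma Q_nonneg: "Q \<ge> 0"
  using lam_pos N_pos mu_pos by (simp add: Q_def)

lemma kap_pos: "kap > 0"
  using m_pos lam_pos Q_nonneg by (simp add: kap_def)

lemma const2: "kap * L^2 / (\<mu> * m * lam) \<le> (eps - c) / 2"
proof -
  have Q1: "Q + 1 > 0" using Q_nonneg by simp
  have A: "kap * L^2 / (\<mu> * m * lam) = L^2 / (2 * \<mu> * (Q + 1))"
  proof -
    have "kap * L^2 / (\<mu> * m * lam) = (m * lam) * L^2 / ((m * lam) * (2 * \<mu> * (Q + 1)))"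
      by (simp add: kap_def mult_ac)
    also have "\<dots> = L^2 / (2 * \<mu> * (Q + 1))"
      using m_pos lam_pos by (simp only: mult.assoc mult_divide_mult_cancel_left)
    finally show ?thesis .
  qed
  have B: "(eps - c) / 2 = \<mu> * th / 8" by (simp add: eps_def c_def)
  have "4 * L^2 \<le> \<mu>^2 * th * (Q + 1)"
  proof -
    have "\<mu>^2 * th * (Q + 1) = 16 * NN * L^2 / 3 + \<mu>^2 * th"
      using Q_eq by (simp add: algebra_simps)
    moreover have "16 * NN * L^2 / 3 \<ge> 4 * L^2"
    proof -
      have "2 * L^2 \<le> NN * L^2" using N_ge2 by (intro mult_right_mono) auto
      thus ?thesis using zero_le_power2[of L] by linarith
    qed
    moreover have "\<mu>^2 * th \<ge> 0" using th_pos by simp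
    ultimately show ?thesis by linarith
  qed
  moreover have eq: "\<mu> * th / 8 * (2 * \<mu> * (Q + 1)) = (\<mu>^2 * th * (Q + 1)) / 4"
    by (simp add: power2_eq_square algebra_simps)
  ultimately have le: "L^2 \<le> \<mu> * th / 8 * (2 * \<mu> * (Q + 1))" by linarith
  have pos: "2 * \<mu> * (Q + 1) > 0" using mu_pos Q1 by simp
  have "L^2 / (2 * \<mu> * (Q + 1)) \<le> \<mu> * th / 8"
    using le by (subst pos_divide_le_eq[OF pos])
  thus ?thesis using A B by simp
qed

lemma g_bound: assumes t: "t > 0" shows "\<bar>\<xi>' t i / M i\<bar> \<le> Cc"
proof -
  have "\<bar>\<xi>' t i\<bar> / M i \<le> Sup ((\<lambda>s. \<bar>\<xi>' s i\<bar> / M i) ` {0<..})"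
    by (rule cSup_upper) (use t C_finite in auto)
  also have "\<dots> \<le> Cc" unfolding Cc_def by (rule Max_ge) auto
  finally show ?thesis using M_pos[of i] by (simp add: abs_divide)
qed

lemma Cc_nonneg: "Cc \<ge> 0"
  by (rule order_trans[OF abs_ge_zero g_bound[of 1 undefined]]) simp

lemma sum3: "(\<Sum>i\<in>UNIV. M i * (A * x i + Bc * y i + D)) = A * (\<Sum>i\<in>UNIV. M i * x i) + Bc * (\<Sum>i\<in>UNIV. M i * y i) + D * m"
proof -
  have "(\<Sum>i\<in>UNIV. M i * (A * x i + Bc * y i + D)) = (\<Sum>i\<in>UNIV. A * (M i * x i) + Bc * (M i * y i) + D * M i)"
    by (rule sum.cong) (auto simp: algebra_simps)
  thus ?thesis by (simp add: sum.distrib sum_distrib_left m_def)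
qed

lemma Dl_bounds: "\<mu> \<le> - f' i w / M i" "- f' i w / M i \<le> L"
  using f'_bounds[of i w] by auto

lemma Vd_bound:
  assumes t: "t > 0"
  shows "Vd t \<le> - (eps / 2) * Qf (e t) (e t) - (c / 2) * (\<Sum>i\<in>UNIV. M i * (z t i)^2) + F"
proof -
  define a where "a = Qf (e t) (e t)"
  define Dl where "Dl i = - f' i (\<omega> t i) / M i" for i
  define g where "g i = \<xi>' t i / M i" for i
  define T where "T i = - (Dl i - eps) * (z t i)^2 + eps * (Dl i - eps) * z t i * e t i + z t i * g i" for i
  have Lxe: "Lx (e t) = Lx (\<omega> t)"
    using Lx_shift(2)[of "\<omega> t" "ob t"] by (simp add: e_def[abs_def])
  have zf: "z t = (\<lambda>i. u t i + eps * e t i)" by (simp add: fun_eq_iff z_def)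
  have 1: "Qf (e t) (\<lambda>i. u t i - obd t) = Qf (u t) (e t)"
    using Qf_shift2[of "e t" "u t" "obd t"] Qf_sym by simp
  have 2: "(\<Sum>i\<in>UNIV. z t i * Lx (e t) i) = Qf (u t) (e t) + eps * a"
    using Qf_lin1[of "u t" eps "e t" "e t"] zf by (simp add: Qf_def a_def)
  have 3: "(\<Sum>i\<in>UNIV. M i * z t i) = m * obd t"
  proof -
    have "(\<Sum>i\<in>UNIV. M i * z t i) = (\<Sum>i\<in>UNIV. M i * u t i) + eps * (\<Sum>i\<in>UNIV. M i * e t i)"
      by (simp add: z_def algebra_simps sum.distrib sum_distrib_left)
    thus ?thesis using e_sum m_pos by (simp add: obd_def)
  qed
  have 4: "M i * z t i * (ud t i + eps * (u t i - obd t))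
        = M i * T i - z t i * Lx (e t) i - eps * obd t * (M i * z t i)" for i
  proof -
    have u: "u t i = z t i - eps * e t i" by (simp add: z_def)
    have "M i * z t i * (ud t i + eps * (u t i - obd t))
        = z t i * (f' i (\<omega> t i) * u t i + \<xi>' t i - Lx (\<omega> t) i) + eps * M i * z t i * u t i - eps * obd t * (M i * z t i)"
      using Mnz'[of i] by (simp add: ud_def field_simps)
    also have "\<dots> = M i * T i - z t i * Lx (e t) i - eps * obd t * (M i * z t i)"
      unfolding T_def Dl_def g_def Lxe u using Mnz'[of i] by (simp add: field_simps power2_eq_square)
    finally show ?thesis .
  qed
  have Vd_eq: "Vd t = (\<Sum>i\<in>UNIV. M i * T i) - eps * a - eps * m * (obd t)^2"
  proof -
    have "Vd t = Qf (u t) (e t) + ((\<Sum>i\<in>UNIV. M i * T i) - (\<Sum>i\<in>UNIV. z t i * Lx (e t) i) - eps * obd t * (\<Sum>i\<in>UNIV. M i * z t i))"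
      unfolding Vd_def 1 4 by (simp add: sum_subtractf sum_distrib_left)
    also have "\<dots> = (\<Sum>i\<in>UNIV. M i * T i) - eps * a - eps * m * (obd t)^2"
      unfolding 2 3 by (simp add: power2_eq_square algebra_simps)
    finally show ?thesis .
  qed
  have Tb: "T i \<le> - (c / 2) * (z t i)^2 + (eps * lam / 2) * (e t i)^2 + 2 / (3 * \<mu>) * Cc^2" for i
    unfolding T_def
  proof (rule pw_bound)
    show "\<mu> \<le> Dl i" "Dl i \<le> L" using Dl_bounds by (auto simp: Dl_def)
    show "0 < eps" by (rule eps_pos)
    show "eps \<le> \<mu>" using th_le1 mu_pos by (simp add: eps_def)
    show "lam > 0" "\<mu> > 0" by (rule lam_pos, rule mu_pos)
    show "\<bar>g i\<bar> \<le> Cc" unfolding g_def by (rule g_bound[OF t])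
    show "eps + eps * L^2 / (2 * lam) + c / 2 \<le> 5 * \<mu> / 8" by (rule const1)
  qed
  have "(\<Sum>i\<in>UNIV. M i * T i) \<le> (\<Sum>i\<in>UNIV. M i * (- (c / 2) * (z t i)^2 + (eps * lam / 2) * (e t i)^2 + 2 / (3 * \<mu>) * Cc^2))"
    by (intro sum_mono mult_left_mono Tb) (use M_pos in \<open>simp add: less_imp_le\<close>)
  also have "\<dots> = - (c / 2) * (\<Sum>i\<in>UNIV. M i * (z t i)^2) + (eps / 2) * (lam * (\<Sum>i\<in>UNIV. M i * (e t i)^2)) + F"
    unfolding sum3 by (simp add: F_def mult_ac)
  also have "\<dots> \<le> - (c / 2) * (\<Sum>i\<in>UNIV. M i * (z t i)^2) + (eps / 2) * a + F"
    using rayleigh[OF e_sum[of t]] eps_pos by (simp add: a_def)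
  finally have S: "(\<Sum>i\<in>UNIV. M i * T i) \<le> - (c / 2) * (\<Sum>i\<in>UNIV. M i * (z t i)^2) + (eps / 2) * a + F" .
  have "eps * m * (obd t)^2 \<ge> 0" using eps_pos m_pos by simp
  thus ?thesis using Vd_eq S by (simp add: a_def)
qed


lemma sum2: "(\<Sum>i\<in>UNIV. M i * (A * x i + D)) = A * (\<Sum>i\<in>UNIV. M i * x i) + D * m"
proof -
  have "(\<Sum>i\<in>UNIV. M i * (A * x i + D)) = (\<Sum>i\<in>UNIV. A * (M i * x i) + D * M i)"
    by (rule sum.cong) (auto simp: algebra_simps)
  thus ?thesis by (simp add: sum.distrib sum_distrib_left m_def)
qed

lemma sd_term: "s t * (f i (\<omega> t i) - f i (\<omega>b t)) \<le> M i * (L^2 / (2 * \<mu>) * (e t i)^2 + (- (\<mu> / 2) * (s t)^2))"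
proof -
  have split: "s t * (f i (\<omega> t i) - f i (\<omega>b t)) = s t * (f i (\<omega> t i) - f i (ob t)) + (f i (ob t) - f i (\<omega>b t)) * (ob t - \<omega>b t)"
    by (simp add: s_def algebra_simps)
  have m1: "(f i (ob t) - f i (\<omega>b t)) * (ob t - \<omega>b t) \<le> - \<mu> * M i * (s t)^2"
    using f_mono[of i "ob t" "\<omega>b t"] by (simp add: s_def)
  have "s t * (f i (\<omega> t i) - f i (ob t)) \<le> \<bar>s t\<bar> * \<bar>f i (\<omega> t i) - f i (ob t)\<bar>"
    by (metis abs_ge_self abs_mult)
  also have "\<dots> \<le> \<bar>s t\<bar> * (L * M i * \<bar>e t i\<bar>)"
    using f_lip[of i "\<omega> t i" "ob t"] by (intro mult_left_mono) (auto simp: e_def)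
  also have "\<dots> = M i * (L * \<bar>e t i\<bar> * \<bar>s t\<bar>)" by (simp add: mult_ac)
  also have "\<dots> \<le> M i * (L^2 / (2 * \<mu>) * (e t i)^2 + \<mu> / 2 * (s t)^2)"
    using amgm_abs[OF mu_pos, of L "e t i" "s t"] M_pos[of i] by (intro mult_left_mono) auto
  finally have m2: "s t * (f i (\<omega> t i) - f i (ob t)) \<le> M i * (L^2 / (2 * \<mu>) * (e t i)^2 + \<mu> / 2 * (s t)^2)" .
  show ?thesis using split m1 m2 by (simp add: algebra_simps)
qed

lemma sd_bound:
  "kap * (2 * s t * (obd t - wbd t)) \<le> - kap * \<mu> * (s t)^2 + kap * L^2 / (\<mu> * m) * (\<Sum>i\<in>UNIV. M i * (e t i)^2)"
proof -
  have "obd t - wbd t = (\<Sum>i\<in>UNIV. f i (\<omega> t i) - f i (\<omega>b t)) / m"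
    unfolding obd_eq wbd_eq sum_subtractf by (simp add: diff_divide_distrib[symmetric])
  moreover have "(\<Sum>i\<in>UNIV. s t * (f i (\<omega> t i) - f i (\<omega>b t))) = s t * (\<Sum>i\<in>UNIV. f i (\<omega> t i) - f i (\<omega>b t))"
    by (simp add: sum_distrib_left)
  ultimately have eq: "2 * s t * (obd t - wbd t) = 2 / m * (\<Sum>i\<in>UNIV. s t * (f i (\<omega> t i) - f i (\<omega>b t)))"
    by simp
  have "(\<Sum>i\<in>UNIV. s t * (f i (\<omega> t i) - f i (\<omega>b t))) \<le> (\<Sum>i\<in>UNIV. M i * (L^2 / (2 * \<mu>) * (e t i)^2 + (- (\<mu> / 2) * (s t)^2)))"
    by (intro sum_mono sd_term)
  also have "\<dots> = - (\<mu> / 2) * (s t)^2 * m + L^2 / (2 * \<mu>) * (\<Sum>i\<in>UNIV. M i * (e t i)^2)"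
    unfolding sum2 by simp
  finally have S: "(\<Sum>i\<in>UNIV. s t * (f i (\<omega> t i) - f i (\<omega>b t))) \<le> - (\<mu> / 2) * (s t)^2 * m + L^2 / (2 * \<mu>) * (\<Sum>i\<in>UNIV. M i * (e t i)^2)" .
  have k: "2 * kap / m \<ge> 0" using kap_pos m_pos by simp
  have "kap * (2 * s t * (obd t - wbd t)) = (2 * kap / m) * (\<Sum>i\<in>UNIV. s t * (f i (\<omega> t i) - f i (\<omega>b t)))"
    unfolding eq by simp
  also have "\<dots> \<le> (2 * kap / m) * (- (\<mu> / 2) * (s t)^2 * m + L^2 / (2 * \<mu>) * (\<Sum>i\<in>UNIV. M i * (e t i)^2))"
    using mult_left_mono[OF S k] .
  also have "\<dots> = - kap * \<mu> * (s t)^2 + kap * L^2 / (\<mu> * m) * (\<Sum>i\<in>UNIV. M i * (e t i)^2)"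
    using m_pos mu_pos by (simp add: field_simps)
  finally show ?thesis .
qed

lemma W_expand: "W t = Qf (e t) (e t) / 2 + (\<Sum>i\<in>UNIV. M i * (z t i)^2) / 2 + kap * (s t)^2"
  by (simp add: W_def V_def)

lemma Wd_bound: assumes t: "t > 0" shows "Wd t \<le> - c * W t + F"
proof -
  define a where "a = Qf (e t) (e t)"
  define Z where "Z = (\<Sum>i\<in>UNIV. M i * (z t i)^2)"
  define E2 where "E2 = (\<Sum>i\<in>UNIV. M i * (e t i)^2)"
  have ray: "lam * E2 \<le> a" using rayleigh[OF e_sum[of t]] by (simp add: E2_def a_def)
  have a0: "a \<ge> 0" unfolding a_def by (rule Qf_nonneg)
  have Z0: "Z \<ge> 0" unfolding Z_def using M_pos by (intro sum_nonneg) (simp add: less_imp_le)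
  have kc: "kap * L^2 / (\<mu> * m) \<ge> 0" using kap_pos mu_pos m_pos by simp
  define K1 where "K1 = kap * L^2 / (\<mu> * m)"
  define S2 where "S2 = (s t)^2"
  have "K1 * E2 \<le> K1 * (a / lam)"
    using ray lam_pos kc by (intro mult_left_mono) (simp_all add: K1_def pos_le_divide_eq mult.commute)
  also have "\<dots> = (kap * L^2 / (\<mu> * m * lam)) * a" by (simp add: K1_def)
  also have "\<dots> \<le> ((eps - c) / 2) * a" using const2 a0 by (rule mult_right_mono)
  also have "\<dots> = (eps / 2) * a - (c / 2) * a" by (simp add: field_simps)
  finally have T: "K1 * E2 \<le> (eps / 2) * a - (c / 2) * a" .
  have cm: "c \<le> \<mu>" using th_le1 mu_pos by (simp add: c_def)
  have km: "(c * kap) * S2 \<le> (kap * \<mu>) * S2"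
    using cm kap_pos by (intro mult_right_mono) (auto simp: S2_def)
  have "Wd t \<le> (- (eps / 2) * a - (c / 2) * Z + F) + (- (kap * \<mu>) * S2 + K1 * E2)"
    using Vd_bound[OF t] sd_bound[of t] unfolding Wd_def a_def Z_def E2_def K1_def S2_def
    by (simp add: algebra_simps)
  also have "\<dots> \<le> (- (eps / 2) * a - (c / 2) * Z + F) + (- (kap * \<mu>) * S2 + ((eps / 2) * a - (c / 2) * a))"
    using T by linarith
  also have "\<dots> \<le> (- (eps / 2) * a - (c / 2) * Z + F) + (- (c * kap) * S2 + ((eps / 2) * a - (c / 2) * a))"
  proof -
    have km2: "- (kap * \<mu>) * S2 \<le> - (c * kap) * S2" using km by simp
    show ?thesis by (rule add_left_mono, rule add_right_mono, rule km2)
  qed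
  also have "\<dots> = - c * W t + F"
    unfolding W_expand a_def Z_def S2_def by (simp add: algebra_simps)
  finally show ?thesis .
qed

end

lemma comparison:
  fixes W Wd :: "real \<Rightarrow> real"
  assumes c: "c > 0" and F: "F \<ge> 0"
    and d: "\<And>t. t > 0 \<Longrightarrow> (W has_real_derivative Wd t) (at t)"
    and b: "\<And>t. t > 0 \<Longrightarrow> Wd t \<le> - c * W t + F"
    and lim: "(W \<longlongrightarrow> W0) (at_right 0)"
    and t: "t > 0"
  shows "W t \<le> W0 * exp (- c * t) + F / c"
proof -
  define h where "h x = exp (c * x) * (W x - F / c)" for x
  have hd: "(h has_real_derivative exp (c * x) * (Wd x + c * W x - F)) (at x)" if "x > 0" for x
  proof -
    have e1: "((\<lambda>x. exp (c * x)) has_real_derivative exp (c * x) * (c * 1)) (at x)"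
      by (rule DERIV_chain2[OF DERIV_exp], rule DERIV_cmult, rule DERIV_ident)
    have w1: "((\<lambda>x. W x - F / c) has_real_derivative Wd x) (at x)"
      using DERIV_diff[OF d[OF that] DERIV_const[of "F / c"]] by simp
    have "(h has_real_derivative (exp (c * x) * (c * 1)) * (W x - F / c) + Wd x * exp (c * x)) (at x)"
      unfolding h_def[abs_def] by (rule DERIV_mult[OF e1 w1])
    moreover have "(exp (c * x) * (c * 1)) * (W x - F / c) + Wd x * exp (c * x) = exp (c * x) * (Wd x + c * W x - F)"
      using c by (simp add: field_simps)
    ultimately show ?thesis by simp
  qed
  have mono: "h t \<le> h x" if "0 < x" "x \<le> t" for x
  proof (rule DERIV_nonpos_imp_nonincreasing[OF that(2)])
    fix y assume "x \<le> y" "y \<le> t"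
    hence y: "y > 0" using that by simp
    show "\<exists>D. (h has_real_derivative D) (at y) \<and> D \<le> 0"
    proof (intro exI conjI)
      show "(h has_real_derivative exp (c * y) * (Wd y + c * W y - F)) (at y)" by (rule hd[OF y])
      show "exp (c * y) * (Wd y + c * W y - F) \<le> 0"
        using b[OF y] by (intro mult_nonneg_nonpos) auto
    qed
  qed
  have hlim: "(h \<longlongrightarrow> exp (c * 0) * (W0 - F / c)) (at_right 0)"
    unfolding h_def[abs_def] by (intro tendsto_intros lim)
  have ev: "eventually (\<lambda>x. h t \<le> h x) (at_right 0)"
    unfolding eventually_at_right_field using t by (intro exI[of _ t]) (auto intro: mono)
  have "h t \<le> W0 - F / c"
    using tendsto_le[OF trivial_limit_at_right_real hlim tendsto_const ev] by simp
  hence "W t - F / c \<le> (W0 - F / c) * exp (- c * t)"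
    unfolding h_def by (simp add: exp_minus field_simps)
  also have "\<dots> \<le> W0 * exp (- c * t)"
    using c F by (simp add: algebra_simps)
  finally show ?thesis by simp
qed


context pn begin

definition "W0 = (\<Sum>i\<in>UNIV. (\<xi>0p i - \<xi>0m i)^2 / (2 * M i))"

lemma omega0_const: "\<omega> 0 i = \<omega> 0 j"
proof -
  have "E\<^sup>*\<^sup>* i j" by (rule E_conn)
  thus ?thesis by (induction rule: rtranclp_induct) (auto dest: steady2)
qed

lemma ob0: "ob 0 = \<omega> 0 i"
proof -
  have "(\<Sum>j\<in>UNIV. M j * \<omega> 0 j) = (\<Sum>j\<in>UNIV. M j * \<omega> 0 i)"
    by (intro sum.cong refl) (metis omega0_const)
  also have "\<dots> = m * \<omega> 0 i" by (simp add: m_def sum_distrib_right)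
  finally show ?thesis using m_pos by (simp add: ob_def)
qed

lemma e0: "e 0 i = 0" by (simp add: e_def ob0[of i])

lemma s0: "s 0 = 0" by (simp add: s_def \<omega>b_init ob_def m_def)

lemma m_nz: "m \<noteq> 0" using m_pos by simp

lemma lim_cont: "continuous_on {0..} g \<Longrightarrow> (g \<longlongrightarrow> g 0) (at_right (0::real))"
proof -
  assume "continuous_on {0..} g"
  hence "(g \<longlongrightarrow> g 0) (at 0 within {0..})" unfolding continuous_on_def by auto
  moreover have "{0<..} \<subseteq> {(0::real)..}" by auto
  ultimately show ?thesis by (rule tendsto_within_subset)
qed

lemma W_lim: "(W \<longlongrightarrow> W0) (at_right 0)"
proof -
  have lw: "((\<lambda>t. \<omega> t i) \<longlongrightarrow> \<omega> 0 i) (at_right 0)" for i using lim_cont[OF \<omega>_cont] .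
  have lth: "((\<lambda>t. \<theta> t i) \<longlongrightarrow> \<theta> 0 i) (at_right 0)" for i using lim_cont[OF \<theta>_cont] .
  have lwb: "(\<omega>b \<longlongrightarrow> \<omega>b 0) (at_right 0)" using lim_cont[OF \<omega>b_cont] .
  have lf: "((\<lambda>t. f i (\<omega> t i)) \<longlongrightarrow> f i (\<omega> 0 i)) (at_right 0)" for i
    using isCont_tendsto_compose[OF DERIV_isCont[OF f_deriv] lw] .
  have lu: "((\<lambda>t. u t i) \<longlongrightarrow> (\<xi>0p i - \<xi>0m i) / M i) (at_right 0)" for i
  proof -
    have "((\<lambda>t. u t i) \<longlongrightarrow> (f i (\<omega> 0 i) + \<xi>0p i - Lx (\<theta> 0) i) / M i) (at_right 0)"
      unfolding u_def Lx_def by (intro tendsto_intros lf \<xi>0p_lim lth Mnz')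
    moreover have "f i (\<omega> 0 i) + \<xi>0p i - Lx (\<theta> 0) i = \<xi>0p i - \<xi>0m i"
      using steady1[of i] by (simp add: Lx_def)
    ultimately show ?thesis by (simp add: Mnz')
  qed
  have lob: "(ob \<longlongrightarrow> ob 0) (at_right 0)"
    unfolding ob_def[abs_def] by (intro tendsto_intros lw m_nz)
  have le: "((\<lambda>t. e t i) \<longlongrightarrow> 0) (at_right 0)" for i
  proof -
    have "((\<lambda>t. e t i) \<longlongrightarrow> \<omega> 0 i - ob 0) (at_right 0)"
      unfolding e_def by (intro tendsto_intros lw lob)
    thus ?thesis using e0[of i] by (simp add: e_def)
  qed
  have lz: "((\<lambda>t. z t i) \<longlongrightarrow> (\<xi>0p i - \<xi>0m i) / M i + eps * 0) (at_right 0)" for i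
    unfolding z_def by (intro tendsto_intros lu le)
  have la: "((\<lambda>t. Qf (e t) (e t)) \<longlongrightarrow> (\<Sum>i\<in>UNIV. 0 * (\<Sum>j\<in>{j. E i j}. B i j * (0 - 0)))) (at_right 0)"
    unfolding Qf_def Lx_def by (intro tendsto_intros le)
  have ls: "(s \<longlongrightarrow> ob 0 - \<omega>b 0) (at_right 0)"
    unfolding s_def[abs_def] by (intro tendsto_intros lob lwb)
  have "(W \<longlongrightarrow> (\<Sum>i\<in>UNIV. 0 * (\<Sum>j\<in>{j. E i j}. B i j * (0 - 0))) / 2
            + (\<Sum>i\<in>UNIV. M i * ((\<xi>0p i - \<xi>0m i) / M i + eps * 0)^2) / 2 + kap * (ob 0 - \<omega>b 0)^2) (at_right 0)"
    unfolding W_def[abs_def] V_def[abs_def] by (intro tendsto_intros la lz ls) auto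
  moreover have "(\<Sum>i\<in>UNIV. 0 * (\<Sum>j\<in>{j. E i j}. B i j * (0 - 0))) / 2
            + (\<Sum>i\<in>UNIV. M i * ((\<xi>0p i - \<xi>0m i) / M i + eps * 0)^2) / 2 + kap * (ob 0 - \<omega>b 0)^2 = W0"
  proof -
    have "ob 0 - \<omega>b 0 = 0" using s0 by (simp add: s_def)
    moreover have "M i * ((\<xi>0p i - \<xi>0m i) / M i)^2 / 2 = (\<xi>0p i - \<xi>0m i)^2 / (2 * M i)" for i
      using Mnz'[of i] by (simp add: power2_eq_square field_simps)
    ultimately show ?thesis by (simp add: W0_def sum_divide_distrib mult.commute)
  qed
  ultimately show ?thesis by simp
qed

lemma F_nonneg: "F \<ge> 0" using m_pos mu_pos by (simp add: F_def)

lemma W_bound: "t > 0 \<Longrightarrow> W t \<le> W0 * exp (- c * t) + F / c"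
  by (rule comparison[OF c_pos F_nonneg d_W Wd_bound W_lim])

definition "Mmin = Min (range M)"
definition "rho = Mmin / m"

lemma Mmin_le: "Mmin \<le> M i" unfolding Mmin_def by (rule Min_le) auto

lemma Mmin_in: "\<exists>i. Mmin = M i"
proof -
  have "Mmin \<in> range M" unfolding Mmin_def by (rule Min_in) auto
  thus ?thesis by auto
qed

lemma Mmin_pos: "Mmin > 0" using Mmin_in M_pos by auto

lemma m_gt: "m > M i"
proof -
  have "UNIV - {i} \<noteq> {}"
  proof
    assume "UNIV - {i} = {}"
    hence "(UNIV::'n set) = {i}" by auto
    hence "card (UNIV::'n set) = card {i}" by simp
    thus False using N2 by simp
  qed
  hence "(\<Sum>j\<in>UNIV - {i}. M j) > 0" using M_pos by (intro sum_pos) auto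
  moreover have "m = M i + (\<Sum>j\<in>UNIV - {i}. M j)"
    unfolding m_def by (simp add: sum.remove[of UNIV i])
  ultimately show ?thesis by simp
qed

lemma rho_pos: "rho > 0" using Mmin_pos m_pos by (simp add: rho_def)

lemma rho_lt1: "rho < 1"
  using Mmin_in m_gt m_pos by (auto simp: rho_def)

lemma NMmin_le: "NN * Mmin \<le> m"
proof -
  have "(\<Sum>i\<in>{i. M i > 0}. Mmin) \<le> (\<Sum>i\<in>{i. M i > 0}. M i)" by (rule sum_mono) (rule Mmin_le)
  thus ?thesis unfolding NN_def m_def NN_set by simp
qed

lemma proj: "(e t i)^2 \<le> (1 / M i - 1 / m) * (\<Sum>j\<in>UNIV. M j * (e t j)^2)"
proof -
  define E2 where "E2 = (\<Sum>j\<in>UNIV. M j * (e t j)^2)"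
  define g where "g = - M i * e t i / (m - M i)"
  have mM: "m - M i > 0" using m_gt[of i] by simp
  have "(\<Sum>j\<in>UNIV. M j * (e t j - g)^2) = E2 - 2 * g * (\<Sum>j\<in>UNIV. M j * e t j) + g^2 * m"
  proof -
    have "(\<Sum>j\<in>UNIV. M j * (e t j - g)^2) = (\<Sum>j\<in>UNIV. M j * (e t j)^2 - (2 * g) * (M j * e t j) + g^2 * M j)"
      by (rule sum.cong) (auto simp: power2_eq_square algebra_simps)
    thus ?thesis by (simp add: E2_def sum.distrib sum_subtractf sum_distrib_left m_def)
  qed
  hence eq: "(\<Sum>j\<in>UNIV. M j * (e t j - g)^2) = E2 + g^2 * m" using e_sum[of t] by simp
  have "M i * (e t i - g)^2 \<le> (\<Sum>j\<in>UNIV. M j * (e t j - g)^2)"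
    by (rule member_le_sum) (auto intro!: mult_nonneg_nonneg simp: M_pos less_imp_le)
  hence ineq: "M i * (e t i - g)^2 - g^2 * m \<le> E2" using eq by simp
  have dg: "(m - M i) * g = - M i * e t i" using mM by (simp add: g_def)
  have deg: "(m - M i) * (e t i - g) = m * e t i" using dg by (simp add: algebra_simps)
  have key: "(m - M i)^2 * (M i * (e t i - g)^2 - g^2 * m) = M i * m * (e t i)^2 * (m - M i)"
  proof -
    have "(m - M i)^2 * (M i * (e t i - g)^2 - g^2 * m) = M i * ((m - M i) * (e t i - g))^2 - ((m - M i) * g)^2 * m"
      unfolding power2_eq_square by algebra
    also have "\<dots> = M i * (m * e t i)^2 - (M i * e t i)^2 * m" unfolding deg dg by simp
    also have "\<dots> = M i * m * (e t i)^2 * (m - M i)" unfolding power2_eq_square by algebra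
    finally show ?thesis .
  qed
  have "(m - M i)^2 * (M i * (e t i - g)^2 - g^2 * m) \<le> (m - M i)^2 * E2"
    using ineq by (intro mult_left_mono) auto
  hence "(M i * m * (e t i)^2) * (m - M i) \<le> (E2 * (m - M i)) * (m - M i)"
    unfolding key by (simp add: power2_eq_square mult_ac)
  hence "M i * m * (e t i)^2 \<le> E2 * (m - M i)" using mM by simp
  hence "(e t i)^2 \<le> E2 * (m - M i) / (M i * m)"
    using M_pos[of i] m_pos by (simp add: le_divide_eq mult_ac)
  also have "E2 * (m - M i) / (M i * m) = (1 / M i - 1 / m) * E2"
    using M_pos[of i] m_pos by (simp add: field_simps)
  finally show ?thesis by (simp add: E2_def)
qed

lemma sq_split:
  fixes Aq Bq x y :: real
  assumes "Aq > 1" "(Aq - 1) * (Bq - 1) = 1"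
  shows "(x + y)^2 \<le> Aq * x^2 + Bq * y^2"
proof -
  have yy: "(Aq - 1) * ((Bq - 1) * y^2) = y^2" using assms(2) by (simp add: mult.assoc[symmetric])
  have "0 \<le> ((Aq - 1) * x - y)^2" by simp
  also have "\<dots> = (Aq - 1) * ((Aq - 1) * x^2 - 2 * x * y) + y^2"
    by (simp add: power2_eq_square algebra_simps)
  also have "\<dots> = (Aq - 1) * ((Aq - 1) * x^2 - 2 * x * y) + (Aq - 1) * ((Bq - 1) * y^2)"
    using yy by simp
  also have "\<dots> = (Aq - 1) * ((Aq - 1) * x^2 + (Bq - 1) * y^2 - 2 * x * y)"
    by (simp add: algebra_simps)
  finally have "0 \<le> (Aq - 1) * x^2 + (Bq - 1) * y^2 - 2 * x * y"
    using assms(1) by (simp add: zero_le_mult_iff)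
  thus ?thesis by (simp add: power2_eq_square algebra_simps)
qed

lemma bound_i:
  assumes t: "t > 0"
  shows "(\<omega> t i - \<omega>b t)^2 \<le> 2 * (1 + Q * rho) / (Mmin * lam) * W t"
proof -
  define a where "a = Qf (e t) (e t)"
  define Z where "Z = (\<Sum>i\<in>UNIV. M i * (z t i)^2)"
  define E2 where "E2 = (\<Sum>j\<in>UNIV. M j * (e t j)^2)"
  define A where "A = (1 + Q * rho) / (1 - rho)"
  define Bc where "Bc = (1 + Q * rho) / ((Q + 1) * rho)"
  have r0: "rho > 0" and r1: "rho < 1" using rho_pos rho_lt1 .
  have Q0: "Q \<ge> 0" by (rule Q_nonneg)
  have A1: "A > 1"
  proof -
    have "Q * rho \<ge> 0" using Q0 r0 by simp
    hence "1 - rho < 1 + Q * rho" using r0 by linarith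
    thus ?thesis unfolding A_def using r1 by (subst less_divide_eq_1_pos) auto
  qed
  have pq: "(Q + 1) * rho \<noteq> 0" using r0 Q0 by simp
  have p1: "1 - rho \<noteq> 0" using r1 by simp
  have "A - 1 = (1 + Q * rho) / (1 - rho) - (1 - rho) / (1 - rho)" using p1 by (simp add: A_def)
  also have "\<dots> = ((1 + Q * rho) - (1 - rho)) / (1 - rho)" by (rule diff_divide_distrib[symmetric])
  also have "(1 + Q * rho) - (1 - rho) = (Q + 1) * rho" by (simp add: algebra_simps)
  finally have Am: "A - 1 = (Q + 1) * rho / (1 - rho)" .
  have "Bc - 1 = (1 + Q * rho) / ((Q + 1) * rho) - ((Q + 1) * rho) / ((Q + 1) * rho)" using pq by (simp add: Bc_def)
  also have "\<dots> = ((1 + Q * rho) - (Q + 1) * rho) / ((Q + 1) * rho)" by (rule diff_divide_distrib[symmetric])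
  also have "(1 + Q * rho) - (Q + 1) * rho = 1 - rho" by (simp add: algebra_simps)
  finally have Bm: "Bc - 1 = (1 - rho) / ((Q + 1) * rho)" .
  have AB: "(A - 1) * (Bc - 1) = 1" unfolding Am Bm using r0 r1 Q0 by simp
  have decomp: "(\<omega> t i - \<omega>b t) = e t i + s t" by (simp add: e_def s_def)
  have "(\<omega> t i - \<omega>b t)^2 \<le> A * (e t i)^2 + Bc * (s t)^2"
    unfolding decomp by (rule sq_split[OF A1 AB])
  also have "A * (e t i)^2 \<le> (1 + Q * rho) / (Mmin * lam) * a"
  proof -
    have "(e t i)^2 \<le> (1 / M i - 1 / m) * E2" unfolding E2_def by (rule proj)
    also have "\<dots> \<le> (1 / Mmin - 1 / m) * E2"
    proof (rule mult_right_mono)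
      show "1 / M i - 1 / m \<le> 1 / Mmin - 1 / m"
        using Mmin_le[of i] Mmin_pos by (simp add: frac_le)
      show "0 \<le> E2" unfolding E2_def using M_pos by (intro sum_nonneg) (simp add: less_imp_le)
    qed
    also have "(1 / Mmin - 1 / m) = (1 - rho) / Mmin"
      using Mmin_pos m_pos by (simp add: rho_def field_simps)
    finally have ei: "(e t i)^2 \<le> (1 - rho) / Mmin * E2" .
    have "lam * E2 \<le> a" using rayleigh[OF e_sum[of t]] by (simp add: E2_def a_def)
    hence E2a: "E2 \<le> a / lam" using lam_pos by (simp add: pos_le_divide_eq mult.commute)
    have A0: "A \<ge> 0" using A1 by simp
    have "A * (e t i)^2 \<le> A * ((1 - rho) / Mmin * E2)" using ei A0 by (rule mult_left_mono)
    also have "\<dots> = (1 + Q * rho) / Mmin * E2" using r1 by (simp add: A_def)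
    also have "\<dots> \<le> (1 + Q * rho) / Mmin * (a / lam)"
      using E2a Mmin_pos Q0 r0 by (intro mult_left_mono) auto
    finally show ?thesis by simp
  qed
  finally have step1: "(\<omega> t i - \<omega>b t)^2 \<le> (1 + Q * rho) / (Mmin * lam) * a + Bc * (s t)^2" by simp
  have BK: "Bc = 2 * (1 + Q * rho) / (Mmin * lam) * kap"
  proof -
    define X where "X = 1 + Q * rho"
    define D where "D = Q + 1"
    have nz: "Mmin \<noteq> 0" "lam \<noteq> 0" "D \<noteq> 0" "m \<noteq> 0"
      using Mmin_pos lam_pos Q0 m_pos by (auto simp: D_def)
    have kapD: "kap = m * lam / (2 * D)" by (simp add: kap_def D_def)
    have "2 * X / (Mmin * lam) * kap = X * m / (Mmin * D)"
      using nz by (simp add: kapD field_simps)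
    also have "\<dots> = X / (D * rho)"
      using nz by (simp add: rho_def field_simps)
    finally show ?thesis by (simp add: Bc_def X_def D_def)
  qed
  have Wx: "W t = a / 2 + Z / 2 + kap * (s t)^2" unfolding W_expand a_def Z_def by simp
  have Z0: "Z \<ge> 0" unfolding Z_def using M_pos by (intro sum_nonneg) (simp add: less_imp_le)
  define K0 where "K0 = (1 + Q * rho) / (Mmin * lam)"
  have BK': "Bc = 2 * K0 * kap" using BK by (simp add: K0_def)
  have cpos: "2 * K0 \<ge> 0" using Q0 r0 Mmin_pos lam_pos by (simp add: K0_def)
  have "K0 * a + Bc * (s t)^2 = 2 * K0 * (a / 2 + kap * (s t)^2)"
    unfolding BK' by (simp add: algebra_simps)
  also have "\<dots> \<le> 2 * K0 * W t"
    unfolding Wx using Z0 cpos by (intro mult_left_mono) auto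
  finally have "K0 * a + Bc * (s t)^2 \<le> 2 * K0 * W t" .
  hence "(\<omega> t i - \<omega>b t)^2 \<le> 2 * K0 * W t" using step1 by (simp add: K0_def)
  thus ?thesis by (simp add: K0_def)
qed


lemma Min_sq: "Min (range (\<lambda>i. (M i)^2)) = Mmin^2"
proof (rule Min_eqI)
  show "finite (range (\<lambda>i. (M i)^2))" by simp
  show "\<And>y. y \<in> range (\<lambda>i. (M i)^2) \<Longrightarrow> Mmin^2 \<le> y"
  proof -
    fix y assume "y \<in> range (\<lambda>i. (M i)^2)"
    then obtain i where "y = (M i)^2" by auto
    thus "Mmin^2 \<le> y" using power_mono[OF Mmin_le[of i], of 2] Mmin_pos by simp
  qed
  obtain i0 where "Mmin = M i0" using Mmin_in by blast
  thus "Mmin^2 \<in> range (\<lambda>i. (M i)^2)" by auto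
qed

lemma W0_le: "W0 \<le> (\<Sum>i\<in>UNIV. (\<xi>0p i - \<xi>0m i)^2) / (2 * Mmin)"
proof -
  have "W0 \<le> (\<Sum>i\<in>UNIV. (\<xi>0p i - \<xi>0m i)^2 / (2 * Mmin))"
    unfolding W0_def
  proof (rule sum_mono)
    fix i show "(\<xi>0p i - \<xi>0m i)^2 / (2 * M i) \<le> (\<xi>0p i - \<xi>0m i)^2 / (2 * Mmin)"
      using Mmin_le[of i] Mmin_pos by (intro divide_left_mono) auto
  qed
  thus ?thesis by (simp add: sum_divide_distrib)
qed

lemma c_eq: "c = \<mu> * lam / (4 * (lam + 4 * L^2))"
  by (simp add: c_def th_def)

lemma P_le: "1 + Q * rho \<le> 6 * (1 + L / \<mu>)^2 * (1 + 4 * L^2 / lam)"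
proof -
  define x where "x = L / \<mu>"
  define y where "y = 1 + 4 * L^2 / lam"
  have y1: "y \<ge> 1" using lam_pos by (simp add: y_def)
  have x0: "x \<ge> 0" using L_pos mu_pos by (simp add: x_def)
  have "Q * rho = 16 / 3 * x^2 * y * (NN * Mmin / m)"
    using mu_pos m_pos by (simp add: Q_def rho_def x_def y_def power_divide field_simps)
  also have "\<dots> \<le> 16 / 3 * x^2 * y * 1"
  proof (rule mult_left_mono)
    show "NN * Mmin / m \<le> 1" using NMmin_le m_pos by simp
    show "0 \<le> 16 / 3 * x^2 * y" using y1 by simp
  qed
  finally have A: "Q * rho \<le> 16 / 3 * x^2 * y" by simp
  have "1 + 16 / 3 * x^2 * y \<le> y + 16 / 3 * x^2 * y" using y1 by simp
  also have "\<dots> = (1 + 16 / 3 * x^2) * y" by (simp add: algebra_simps)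
  also have "\<dots> \<le> (6 * (1 + x)^2) * y"
  proof (rule mult_right_mono)
    show "1 + 16 / 3 * x^2 \<le> 6 * (1 + x)^2" using x0 by (simp add: power2_eq_square algebra_simps)
    show "0 \<le> y" using y1 by simp
  qed
  finally have "1 + 16 / 3 * x^2 * y \<le> 6 * (1 + x)^2 * y" .
  hence "1 + Q * rho \<le> 6 * (1 + x)^2 * y" using A by linarith
  thus ?thesis by (simp add: x_def y_def)
qed

lemma final_i:
  assumes t: "t > 0"
  shows "(\<omega> t i - \<omega>b t)^2 \<le>
     ((1 / Min (range (\<lambda>i. (M i)^2)) + 16 * L^2 / (3 * \<mu>^2 * ((\<Sum>i\<in>UNIV. M i) / NN) * Min (range M))) * lambda2 M E B
        + 4 * (16 * L^2 / (3 * \<mu>^2 * ((\<Sum>i\<in>UNIV. M i) / NN) * Min (range M))) * L^2) / (lambda2 M E B)^2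
       * (\<Sum>i\<in>UNIV. (\<xi>0p i - \<xi>0m i)^2) * exp (- (\<mu> * lambda2 M E B / (4 * (lambda2 M E B + 4 * L^2))) * t)
     + 32 * NN * ((\<Sum>i\<in>UNIV. M i) / NN) * (1 + L / \<mu>)^2 / (Min (range M) * \<mu>^2)
       * (Max (range (\<lambda>i. Sup ((\<lambda>s. \<bar>\<xi>' s i\<bar> / M i) ` {0<..}))))^2
       * (lambda2 M E B + 4 * L^2)^2 / (lambda2 M E B)^3"
proof -
  define P where "P = 1 + Q * rho"
  define G where "G = 2 * P / (Mmin * lam)"
  define dxi where "dxi = (\<Sum>i\<in>UNIV. (\<xi>0p i - \<xi>0m i)^2)"
  define D2 where "D2 = lam + 4 * L^2"
  define R where "R = m * Cc^2 * D2 / (\<mu>^2 * Mmin * lam^2)"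
  define Y where "Y = (1 + L / \<mu>)^2"
  define alpha where "alpha = P / (Mmin^2 * lam)"
  have P0: "P \<ge> 0" using Q_nonneg rho_pos by (simp add: P_def)
  have G0: "G \<ge> 0" using P0 Mmin_pos lam_pos by (simp add: G_def)
  have nz: "\<mu> \<noteq> 0" "m \<noteq> 0" "Mmin \<noteq> 0" "lam \<noteq> 0" "D2 \<noteq> 0" "NN \<noteq> 0"
    using mu_pos m_pos Mmin_pos lam_pos den_pos N_pos by (auto simp: D2_def)
  have R0: "R \<ge> 0" using m_pos mu_pos Mmin_pos lam_pos den_pos by (simp add: R_def D2_def)
  have "(\<omega> t i - \<omega>b t)^2 \<le> G * W t" using bound_i[OF t, of i] by (simp add: G_def P_def)
  also have "\<dots> \<le> G * (W0 * exp (- c * t) + F / c)"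
    using W_bound[OF t] G0 by (rule mult_left_mono)
  also have "\<dots> = G * W0 * exp (- c * t) + G * (F / c)" by (simp add: algebra_simps)
  also have "G * W0 * exp (- c * t) \<le> alpha * dxi * exp (- c * t)"
  proof (rule mult_right_mono)
    have "G * W0 \<le> G * (dxi / (2 * Mmin))" using mult_left_mono[OF W0_le G0] by (simp add: dxi_def)
    also have "\<dots> = alpha * dxi" using nz by (simp add: G_def alpha_def power2_eq_square field_simps)
    finally show "G * W0 \<le> alpha * dxi" .
  qed simp
  also have "G * (F / c) = 16 / 3 * P * R"
  proof -
    have cD: "c = \<mu> * lam / (4 * D2)" by (simp add: c_eq D2_def)
    show ?thesis using nz by (simp add: G_def F_def cD R_def power2_eq_square field_simps)
  qed
  also have "16 / 3 * P * R \<le> 16 / 3 * (6 * Y * (D2 / lam)) * R"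
  proof (rule mult_right_mono[OF _ R0], rule mult_left_mono)
    have "1 + 4 * L^2 / lam = D2 / lam" using nz by (simp add: D2_def field_simps)
    thus "P \<le> 6 * Y * (D2 / lam)" using P_le by (simp add: P_def Y_def)
  qed simp
  also have "16 / 3 * (6 * Y * (D2 / lam)) * R
      = 32 * NN * ((\<Sum>i\<in>UNIV. M i) / NN) * (1 + L / \<mu>)^2 / (Min (range M) * \<mu>^2)
       * (Max (range (\<lambda>i. Sup ((\<lambda>s. \<bar>\<xi>' s i\<bar> / M i) ` {0<..}))))^2
       * (lambda2 M E B + 4 * L^2)^2 / (lambda2 M E B)^3"
    using nz unfolding m_def[symmetric] Mmin_def[symmetric] Cc_def[symmetric] lam_def[symmetric] D2_def[symmetric] Y_def[symmetric]
    by (simp add: R_def power2_eq_square power3_eq_cube field_simps)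
  also have "alpha = ((1 / Min (range (\<lambda>i. (M i)^2)) + 16 * L^2 / (3 * \<mu>^2 * ((\<Sum>i\<in>UNIV. M i) / NN) * Min (range M))) * lambda2 M E B
        + 4 * (16 * L^2 / (3 * \<mu>^2 * ((\<Sum>i\<in>UNIV. M i) / NN) * Min (range M))) * L^2) / (lambda2 M E B)^2"
    unfolding Min_sq m_def[symmetric] Mmin_def[symmetric] lam_def[symmetric] alpha_def P_def Q_def rho_def
    using nz by (simp add: power2_eq_square field_simps)
  also have "c = \<mu> * lambda2 M E B / (4 * (lambda2 M E B + 4 * L^2))" by (simp add: c_eq lam_def)
  finally show ?thesis by (simp add: dxi_def)
qed

end




theorem proposition5p2:
  fixes E :: "'n::finite \<Rightarrow> 'n \<Rightarrow> bool"
    and B :: "'n \<Rightarrow> 'n \<Rightarrow> real"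
    and M :: "'n \<Rightarrow> real"
    and f f' :: "'n \<Rightarrow> real \<Rightarrow> real"
    and \<xi> \<xi>' :: "real \<Rightarrow> 'n \<Rightarrow> real"
    and \<xi>0m \<xi>0p :: "'n \<Rightarrow> real"
    and \<theta> \<omega> :: "real \<Rightarrow> 'n \<Rightarrow> real"
    and \<omega>b :: "real \<Rightarrow> real"
    and \<mu> L :: real
  assumes N2: "CARD('n) \<ge> 2"
    and E_sym: "\<And>i j. E i j \<Longrightarrow> E j i"
    and E_irrefl: "\<And>i. \<not> E i i"
    and E_conn: "\<And>i j. E\<^sup>*\<^sup>* i j"
    and B_sym: "\<And>i j. B i j = B j i"
    and B_pos: "\<And>i j. E i j \<Longrightarrow> B i j > 0"
    and M_pos: "\<And>i. M i > 0"
    and f0: "\<And>i. f i 0 = 0"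
    and f_deriv: "\<And>i w. (f i has_real_derivative f' i w) (at w)"
    and f'_cont: "\<And>i. continuous_on UNIV (f' i)"
    and mu_pos: "\<mu> > 0" and L_pos: "L > 0"
    and f'_bounds: "\<And>i w. - L \<le> f' i w / M i \<and> f' i w / M i \<le> - \<mu>"
    and \<xi>_deriv: "\<And>i t. t > 0 \<Longrightarrow> ((\<lambda>s. \<xi> s i) has_real_derivative \<xi>' t i) (at t)"
    and \<xi>'_cont: "\<And>i. continuous_on {0<..} (\<lambda>t. \<xi>' t i)"
    and \<xi>0p_lim: "\<And>i. ((\<lambda>t. \<xi> t i) \<longlongrightarrow> \<xi>0p i) (at_right 0)"
    and \<theta>_cont: "\<And>i. continuous_on {0..} (\<lambda>t. \<theta> t i)"
    and \<omega>_cont: "\<And>i. continuous_on {0..} (\<lambda>t. \<omega> t i)"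
    and \<theta>_ode: "\<And>i t. t > 0 \<Longrightarrow> ((\<lambda>s. \<theta> s i) has_real_derivative \<omega> t i) (at t)"
    and \<omega>_ode: "\<And>i t. t > 0 \<Longrightarrow> ((\<lambda>s. \<omega> s i) has_real_derivative
        (f i (\<omega> t i) + \<xi> t i - (\<Sum>j\<in>{j. E i j}. B i j * (\<theta> t i - \<theta> t j))) / M i) (at t)"
    and \<omega>b_cont: "continuous_on {0..} \<omega>b"
    and \<omega>b_ode: "\<And>t. t > 0 \<Longrightarrow> (\<omega>b has_real_derivative
        ((\<Sum>i\<in>UNIV. f i (\<omega>b t)) / real CARD('n) + (\<Sum>i\<in>UNIV. \<xi> t i) / real CARD('n))
          / ((\<Sum>i\<in>UNIV. M i) / real CARD('n))) (at t)"
    and \<omega>b_init: "\<omega>b 0 = (\<Sum>i\<in>UNIV. M i * \<omega> 0 i) / (\<Sum>i\<in>UNIV. M i)"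
    and steady1: "\<And>i. 0 = f i (\<omega> 0 i) + \<xi>0m i - (\<Sum>j\<in>{j. E i j}. B i j * (\<theta> 0 i - \<theta> 0 j))"
    and steady2: "\<And>i j. E i j \<Longrightarrow> 0 = \<omega> 0 i - \<omega> 0 j"
    and C_finite: "\<And>i. bdd_above ((\<lambda>t. \<bar>\<xi>' t i\<bar> / M i) ` {0<..})"
  shows "\<forall>t>0.
    (let N = real CARD('n);
         Mb = (\<Sum>i\<in>UNIV. M i) / N;
         Mmin = Min (range M);
         lam2 = lambda2 M E B;
         K = 32 * N * Mb * (1 + L / \<mu>)^2 / (Mmin * \<mu>^2);
         c = \<mu> * lam2 / (4 * (lam2 + 4 * L^2));
         C = Max (range (\<lambda>i. Sup ((\<lambda>s. \<bar>\<xi>' s i\<bar> / M i) ` {0<..})));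
         phi1 = 1 / Min (range (\<lambda>i. (M i)^2));
         phi2 = 16 * L^2 / (3 * \<mu>^2 * Mb * Mmin);
         alpha = ((phi1 + phi2) * lam2 + 4 * phi2 * L^2) / lam2^2;
         d\<xi>sq = (\<Sum>i\<in>UNIV. (\<xi>0p i - \<xi>0m i)^2)
     in Max (range (\<lambda>i. \<bar>\<omega> t i - \<omega>b t\<bar>^2))
          \<le> alpha * d\<xi>sq * exp (- c * t) + K * C^2 * (lam2 + 4 * L^2)^2 / lam2^3)"
proof -
  interpret P: pn E B M f f' \<xi> \<xi>' \<xi>0m \<xi>0p \<theta> \<omega> \<omega>b \<mu> L
    by unfold_locales (fact assms)+
  have NN: "P.NN = real CARD('n)" by (simp add: P.NN_def P.NN_set)
  show ?thesis
  proof (intro allI impI)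
    fix t :: real assume t: "t > 0"
    show "let N = real CARD('n);
         Mb = (\<Sum>i\<in>UNIV. M i) / N;
         Mmin = Min (range M);
         lam2 = lambda2 M E B;
         K = 32 * N * Mb * (1 + L / \<mu>)^2 / (Mmin * \<mu>^2);
         c = \<mu> * lam2 / (4 * (lam2 + 4 * L^2));
         C = Max (range (\<lambda>i. Sup ((\<lambda>s. \<bar>\<xi>' s i\<bar> / M i) ` {0<..})));
         phi1 = 1 / Min (range (\<lambda>i. (M i)^2));
         phi2 = 16 * L^2 / (3 * \<mu>^2 * Mb * Mmin);
         alpha = ((phi1 + phi2) * lam2 + 4 * phi2 * L^2) / lam2^2;
         d\<xi>sq = (\<Sum>i\<in>UNIV. (\<xi>0p i - \<xi>0m i)^2)
     in Max (range (\<lambda>i. \<bar>\<omega> t i - \<omega>b t\<bar>^2))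
          \<le> alpha * d\<xi>sq * exp (- c * t) + K * C^2 * (lam2 + 4 * L^2)^2 / lam2^3"
      unfolding Let_def
    proof (rule Max.boundedI)
      show "finite (range (\<lambda>i. \<bar>\<omega> t i - \<omega>b t\<bar>^2))" by simp
      show "range (\<lambda>i. \<bar>\<omega> t i - \<omega>b t\<bar>^2) \<noteq> {}" by simp
      fix a assume "a \<in> range (\<lambda>i. \<bar>\<omega> t i - \<omega>b t\<bar>^2)"
      then obtain i where a: "a = \<bar>\<omega> t i - \<omega>b t\<bar>^2" by blast
      show "a \<le> ((1 / Min (range (\<lambda>i. (M i)^2)) + 16 * L^2 / (3 * \<mu>^2 * ((\<Sum>i\<in>UNIV. M i) / real CARD('n)) * Min (range M))) * lambda2 M E B
        + 4 * (16 * L^2 / (3 * \<mu>^2 * ((\<Sum>i\<in>UNIV. M i) / real CARD('n)) * Min (range M))) * L^2) / (lambda2 M E B)^2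
       * (\<Sum>i\<in>UNIV. (\<xi>0p i - \<xi>0m i)^2) * exp (- (\<mu> * lambda2 M E B / (4 * (lambda2 M E B + 4 * L^2))) * t)
     + 32 * real CARD('n) * ((\<Sum>i\<in>UNIV. M i) / real CARD('n)) * (1 + L / \<mu>)^2 / (Min (range M) * \<mu>^2)
       * (Max (range (\<lambda>i. Sup ((\<lambda>s. \<bar>\<xi>' s i\<bar> / M i) ` {0<..}))))^2
       * (lambda2 M E B + 4 * L^2)^2 / (lambda2 M E B)^3"
        unfolding a power2_abs using P.final_i[OF t, of i] unfolding NN .
    qed
  qed
qed


end
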